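(* Let $\mathcal{F}$ be a class of simple graphs and consider the assertions: (1) $\mathcal{F}$ is closed under edge contraction and edge deletion; (2) $\equiv_{\mathcal{F}}$ is preserved under taking complements, i.e.\ for all simple graphs $G$ and $H$ it holds that $G\equiv_{\mathcal{F}}H$ if and only if $\overline{G}\equiv_{\mathcal{F}}\overline{H}$; (3) $\mathrm{cl}(\mathcal{F})$ is minor-closed. Then (1) implies (2), and (2) and (3) are equivalent.
   Context: All graphs are finite, undirected, without multiple edges; simple means without loops. $\hom(F,G)$ is the number of homomorphisms $F\to G$; $G\equiv_{\mathcal{F}}H$ means $\hom(F,G)=\hom(F,H)$ for all $F\in\mathcal{F}$; $\mathrm{cl}(\mathcal{F})$ is the class of all simple graphs $K$ such that for all simple $G,H$, $G\equiv_{\mathcal{F}}H$ implies $\hom(K,G)=\hom(K,H)$. $\overline{G}$ is the complement of a simple graph $G$ (same vertex set, edges $\binom{V(G)}{2}\setminus E(G)$). For a partition $\mathcal{P}$ of $V(F)$, $F/\mathcal{P}$ is the simple graph with vertex set $\mathcal{P}$ and an edge $PQ$ ($P\neq Q$) iff some $p\in P,q\in Q$ are adjacent in $F$. $F'$ is obtained from $F$ by contracting edges if $F'\cong F/\mathcal{P}$ for a partition $\mathcal{P}$ with all $F[P]$ connected. Edge deletion produces a graph with the same vertex set and a subset of the edges. A minor of $F$ is a subgraph of a graph obtained from $F$ by contracting edges. *)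

theory Defs
  imports Main "HOL-Library.FuncSet" "HOL-Library.Disjoint_Sets"
begin

type_synonym 'a graph = "'a set \<times> 'a set set"

definition verts :: "'a graph \<Rightarrow> 'a set" where "verts G = fst G"
definition edges :: "'a graph \<Rightarrow> 'a set set" where "edges G = snd G"

definition simple_graph :: "'a graph \<Rightarrow> bool" where
  "simple_graph G \<longleftrightarrow> finite (verts G) \<and>
     (\<forall>e\<in>edges G. e \<subseteq> verts G \<and> card e = 2)"

definition homs :: "'a graph \<Rightarrow> 'b graph \<Rightarrow> ('a \<Rightarrow> 'b) set" where
  "homs F G = {f \<in> verts F \<rightarrow>\<^sub>E verts G.
      \<forall>u\<in>verts F. \<forall>v\<in>verts F. {u, v} \<in> edges F \<longrightarrow> {f u, f v} \<in> edges G}"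

definition hom :: "'a graph \<Rightarrow> 'b graph \<Rightarrow> nat" where
  "hom F G = card (homs F G)"

definition hom_equiv :: "'a graph set \<Rightarrow> 'b graph \<Rightarrow> 'b graph \<Rightarrow> bool" where
  "hom_equiv \<F> G H \<longleftrightarrow> (\<forall>F\<in>\<F>. hom F G = hom F H)"

text \<open>Homomorphism distinguishing closure; G, H range over all simple graphs
  (vertex type nat suffices to represent every finite graph).\<close>
definition cl :: "nat graph set \<Rightarrow> nat graph set" where
  "cl \<F> = {K. simple_graph K \<and>
     (\<forall>G H :: nat graph. simple_graph G \<longrightarrow> simple_graph H \<longrightarrow>
        hom_equiv \<F> G H \<longrightarrow> hom K G = hom K H)}"

definition complement :: "'a graph \<Rightarrow> 'a graph" where
  "complement G = (verts G, {e. e \<subseteq> verts G \<and> card e = 2} - edges G)"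

definition graph_iso :: "'a graph \<Rightarrow> 'b graph \<Rightarrow> bool" where
  "graph_iso G H \<longleftrightarrow> (\<exists>f. bij_betw f (verts G) (verts H) \<and>
     (\<forall>u\<in>verts G. \<forall>v\<in>verts G. {u, v} \<in> edges G \<longleftrightarrow> {f u, f v} \<in> edges H))"

definition quotient_graph :: "'a graph \<Rightarrow> 'a set set \<Rightarrow> 'a set graph" where
  "quotient_graph F P = (P, {{A, B} | A B. A \<in> P \<and> B \<in> P \<and> A \<noteq> B \<and>
      (\<exists>a\<in>A. \<exists>b\<in>B. {a, b} \<in> edges F)})"

definition induced_connected :: "'a graph \<Rightarrow> 'a set \<Rightarrow> bool" where
  "induced_connected F A \<longleftrightarrow> (\<forall>u\<in>A. \<forall>v\<in>A.
     (u, v) \<in> {(x, y). x \<in> A \<and> y \<in> A \<and> {x, y} \<in> edges F}\<^sup>*)"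

definition contraction_partition :: "'a graph \<Rightarrow> 'a set set \<Rightarrow> bool" where
  "contraction_partition F P \<longleftrightarrow> partition_on (verts F) P \<and> (\<forall>A\<in>P. induced_connected F A)"

definition contracts_to :: "'a graph \<Rightarrow> 'b graph \<Rightarrow> bool" where
  "contracts_to F F' \<longleftrightarrow> (\<exists>P. contraction_partition F P \<and> graph_iso F' (quotient_graph F P))"

definition subgraph :: "'a graph \<Rightarrow> 'a graph \<Rightarrow> bool" where
  "subgraph S G \<longleftrightarrow> verts S \<subseteq> verts G \<and> edges S \<subseteq> edges G \<and>
     (\<forall>e\<in>edges S. e \<subseteq> verts S)"

definition minor :: "'b graph \<Rightarrow> 'a graph \<Rightarrow> bool" where
  "minor M F \<longleftrightarrow> (\<exists>P S. contraction_partition F P \<and> subgraph S (quotient_graph F P) \<and>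
      graph_iso M S)"

definition closed_contraction :: "nat graph set \<Rightarrow> bool" where
  "closed_contraction \<F> \<longleftrightarrow> (\<forall>F\<in>\<F>. \<forall>F'::nat graph. simple_graph F' \<longrightarrow> contracts_to F F' \<longrightarrow> F' \<in> \<F>)"

definition closed_deletion :: "nat graph set \<Rightarrow> bool" where
  "closed_deletion \<F> \<longleftrightarrow> (\<forall>F\<in>\<F>. \<forall>E'. E' \<subseteq> edges F \<longrightarrow> (verts F, E') \<in> \<F>)"

definition minor_closed :: "nat graph set \<Rightarrow> bool" where
  "minor_closed \<C> \<longleftrightarrow> (\<forall>K\<in>\<C>. \<forall>M::nat graph. simple_graph M \<longrightarrow> minor M K \<longrightarrow> M \<in> \<C>)"

end

theory Submission
  imports Defs "HOL-Library.Nat_Bijection"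
begin

lemma simple_edgeD:
  assumes "simple_graph G" "e \<in> edges G"
  shows "\<exists>u v. u \<noteq> v \<and> e = {u, v} \<and> u \<in> verts G \<and> v \<in> verts G"
proof -
  have "card e = 2" "e \<subseteq> verts G" using assms unfolding simple_graph_def by auto
  then show ?thesis by (auto simp: card_2_iff)
qed

lemma simple_edge_card: "simple_graph G \<Longrightarrow> e \<in> edges G \<Longrightarrow> card e = 2"
  unfolding simple_graph_def by auto

lemma simple_edge_sub: "simple_graph G \<Longrightarrow> e \<in> edges G \<Longrightarrow> e \<subseteq> verts G"
  unfolding simple_graph_def by auto

lemma simple_finite: "simple_graph G \<Longrightarrow> finite (verts G)"
  unfolding simple_graph_def by auto

lemma simple_finite_edges: "simple_graph G \<Longrightarrow> finite (edges G)"
proof -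
  assume s: "simple_graph G"
  have "edges G \<subseteq> Pow (verts G)" using s unfolding simple_graph_def by auto
  then show ?thesis using s by (meson finite_Pow_iff rev_finite_subset simple_finite)
qed

lemma edge_not_loop: "simple_graph G \<Longrightarrow> {a, a} \<notin> edges G"
  using simple_edge_card by fastforce

lemma homs_finite: "finite (verts F) \<Longrightarrow> finite (verts G) \<Longrightarrow> finite (homs F G)"
  unfolding homs_def by (rule finite_subset[OF _ finite_PiE]) auto

lemma homs_alt:
  assumes "simple_graph F"
  shows "homs F G = {f \<in> verts F \<rightarrow>\<^sub>E verts G. \<forall>e\<in>edges F. f ` e \<in> edges G}"
proof -
  have "(\<forall>u\<in>verts F. \<forall>v\<in>verts F. {u, v} \<in> edges F \<longrightarrow> {f u, f v} \<in> edges G)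
        \<longleftrightarrow> (\<forall>e\<in>edges F. f ` e \<in> edges G)" for f
  proof
    assume h: "\<forall>u\<in>verts F. \<forall>v\<in>verts F. {u, v} \<in> edges F \<longrightarrow> {f u, f v} \<in> edges G"
    show "\<forall>e\<in>edges F. f ` e \<in> edges G"
    proof
      fix e assume "e \<in> edges F"
      then obtain u v where "e = {u,v}" "u \<in> verts F" "v \<in> verts F"
        using simple_edgeD[OF assms] by blast
      then show "f ` e \<in> edges G" using h \<open>e \<in> edges F\<close> by auto
    qed
  next
    assume "\<forall>e\<in>edges F. f ` e \<in> edges G"
    then show "\<forall>u\<in>verts F. \<forall>v\<in>verts F. {u, v} \<in> edges F \<longrightarrow> {f u, f v} \<in> edges G"
      by fastforce
  qed
  then show ?thesis unfolding homs_def by auto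
qed

lemma graph_iso_refl: "graph_iso G G"
  unfolding graph_iso_def by (rule exI[of _ id]) auto

lemma graph_iso_sym:
  assumes "graph_iso A B" shows "graph_iso B A"
proof -
  obtain f where f: "bij_betw f (verts A) (verts B)"
    "\<forall>u\<in>verts A. \<forall>v\<in>verts A. {u, v} \<in> edges A \<longleftrightarrow> {f u, f v} \<in> edges B"
    using assms unfolding graph_iso_def by blast
  let ?g = "inv_into (verts A) f"
  have g: "bij_betw ?g (verts B) (verts A)" using f(1) by (rule bij_betw_inv_into)
  have "\<forall>x\<in>verts B. \<forall>y\<in>verts B. {x, y} \<in> edges B \<longleftrightarrow> {?g x, ?g y} \<in> edges A"
  proof (intro ballI)
    fix x y assume xy: "x \<in> verts B" "y \<in> verts B"
    have gx: "?g x \<in> verts A" "?g y \<in> verts A" using g xy by (auto simp: bij_betw_def)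
    have "f (?g x) = x" "f (?g y) = y" using f(1) xy by (auto simp: bij_betw_inv_into_right)
    then show "{x, y} \<in> edges B \<longleftrightarrow> {?g x, ?g y} \<in> edges A" using f(2) gx by metis
  qed
  then show ?thesis using g unfolding graph_iso_def by blast
qed

lemma graph_iso_trans:
  assumes "graph_iso A B" "graph_iso B C" shows "graph_iso A C"
proof -
  obtain f where f: "bij_betw f (verts A) (verts B)"
    "\<forall>u\<in>verts A. \<forall>v\<in>verts A. {u, v} \<in> edges A \<longleftrightarrow> {f u, f v} \<in> edges B"
    using assms unfolding graph_iso_def by blast
  obtain g where g: "bij_betw g (verts B) (verts C)"
    "\<forall>u\<in>verts B. \<forall>v\<in>verts B. {u, v} \<in> edges B \<longleftrightarrow> {g u, g v} \<in> edges C"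
    using assms unfolding graph_iso_def by blast
  have "bij_betw (g \<circ> f) (verts A) (verts C)" using f(1) g(1) by (rule bij_betw_trans)
  moreover have "\<forall>u\<in>verts A. \<forall>v\<in>verts A. {u, v} \<in> edges A \<longleftrightarrow> {(g \<circ> f) u, (g \<circ> f) v} \<in> edges C"
  proof (intro ballI)
    fix u v assume uv: "u \<in> verts A" "v \<in> verts A"
    then have "f u \<in> verts B" "f v \<in> verts B" using f(1) by (auto simp: bij_betw_def)
    then show "{u, v} \<in> edges A \<longleftrightarrow> {(g \<circ> f) u, (g \<circ> f) v} \<in> edges C" using f(2) g(2) uv by simp
  qed
  ultimately show ?thesis unfolding graph_iso_def by blast
qed

lemma graph_iso_hom:
  assumes "graph_iso A B" shows "hom A G = hom B G"
proof -
  obtain f where f: "bij_betw f (verts A) (verts B)"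
    "\<forall>u\<in>verts A. \<forall>v\<in>verts A. {u, v} \<in> edges A \<longleftrightarrow> {f u, f v} \<in> edges B"
    using assms unfolding graph_iso_def by blast
  let ?g = "inv_into (verts A) f"
  have fA: "\<And>u. u \<in> verts A \<Longrightarrow> f u \<in> verts B" using f(1) by (auto simp: bij_betw_def)
  have gB: "\<And>x. x \<in> verts B \<Longrightarrow> ?g x \<in> verts A" using f(1)
    by (metis bij_betw_def inv_into_into)
  have fg: "\<And>x. x \<in> verts B \<Longrightarrow> f (?g x) = x" using f(1) by (auto simp: bij_betw_inv_into_right)
  have gf: "\<And>u. u \<in> verts A \<Longrightarrow> ?g (f u) = u" using f(1) by (auto simp: bij_betw_inv_into_left)
  let ?P = "\<lambda>h. restrict (h \<circ> f) (verts A)"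
  let ?Q = "\<lambda>k. restrict (k \<circ> ?g) (verts B)"
  have "bij_betw ?P (homs B G) (homs A G)"
  proof (rule bij_betw_byWitness[where f'="?Q"])
    show "\<forall>h\<in>homs B G. ?Q (?P h) = h"
    proof
      fix h assume "h \<in> homs B G"
      then have "h \<in> verts B \<rightarrow>\<^sub>E verts G" unfolding homs_def by auto
      then show "?Q (?P h) = h"
      proof (intro ext)
        fix x assume hP: "h \<in> verts B \<rightarrow>\<^sub>E verts G"
        show "?Q (?P h) x = h x"
        proof (cases "x \<in> verts B")
          case True then show ?thesis using gB fg by simp
        next
          case False then show ?thesis using hP by (simp add: PiE_def extensional_def)
        qed
      qed
    qed
    show "\<forall>k\<in>homs A G. ?P (?Q k) = k"
    proof
      fix k assume "k \<in> homs A G"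
      then have "k \<in> verts A \<rightarrow>\<^sub>E verts G" unfolding homs_def by auto
      then show "?P (?Q k) = k"
      proof (intro ext)
        fix x assume kP: "k \<in> verts A \<rightarrow>\<^sub>E verts G"
        show "?P (?Q k) x = k x"
        proof (cases "x \<in> verts A")
          case True then show ?thesis using fA gf by simp
        next
          case False then show ?thesis using kP by (simp add: PiE_def extensional_def)
        qed
      qed
    qed
    show "?P ` homs B G \<subseteq> homs A G"
    proof
      fix k assume "k \<in> ?P ` homs B G"
      then obtain h where h: "h \<in> homs B G" "k = ?P h" by blast
      have "k \<in> verts A \<rightarrow>\<^sub>E verts G" using h fA unfolding homs_def by auto
      moreover have "\<forall>u\<in>verts A. \<forall>v\<in>verts A. {u, v} \<in> edges A \<longrightarrow> {k u, k v} \<in> edges G"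
        using h fA f(2) unfolding homs_def by auto
      ultimately show "k \<in> homs A G" unfolding homs_def by auto
    qed
    show "?Q ` homs A G \<subseteq> homs B G"
    proof
      fix h assume "h \<in> ?Q ` homs A G"
      then obtain k where k: "k \<in> homs A G" "h = ?Q k" by blast
      have "h \<in> verts B \<rightarrow>\<^sub>E verts G" using k gB unfolding homs_def by auto
      moreover have "\<forall>x\<in>verts B. \<forall>y\<in>verts B. {x, y} \<in> edges B \<longrightarrow> {h x, h y} \<in> edges G"
      proof (intro ballI impI)
        fix x y assume xy: "x \<in> verts B" "y \<in> verts B" "{x, y} \<in> edges B"
        then have "{?g x, ?g y} \<in> edges A" using f(2) gB fg by metis
        then show "{h x, h y} \<in> edges G" using k xy gB unfolding homs_def by auto
      qed
      ultimately show "h \<in> homs B G" unfolding homs_def by auto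
    qed
  qed
  then show ?thesis unfolding hom_def by (metis bij_betw_same_card)
qed

lemma graph_iso_card_verts:
  assumes "graph_iso A B" shows "card (verts A) = card (verts B)"
  using assms unfolding graph_iso_def by (metis bij_betw_same_card)

lemma graph_iso_card_edges:
  assumes "graph_iso A B" "simple_graph A" "simple_graph B"
  shows "card (edges A) = card (edges B)"
proof -
  obtain f where f: "bij_betw f (verts A) (verts B)"
    "\<forall>u\<in>verts A. \<forall>v\<in>verts A. {u, v} \<in> edges A \<longleftrightarrow> {f u, f v} \<in> edges B"
    using assms unfolding graph_iso_def by blast
  have "edges B = (\<lambda>e. f ` e) ` edges A"
  proof
    show "(\<lambda>e. f ` e) ` edges A \<subseteq> edges B"
    proof
      fix e' assume "e' \<in> (\<lambda>e. f ` e) ` edges A"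
      then obtain e where e: "e \<in> edges A" "e' = f ` e" by blast
      then obtain u v where "e = {u,v}" "u \<in> verts A" "v \<in> verts A" using simple_edgeD[OF assms(2)] by blast
      moreover have "{f u, f v} \<in> edges B" using f(2) \<open>u \<in> verts A\<close> \<open>v \<in> verts A\<close> e(1) \<open>e = {u,v}\<close> by blast
      ultimately show "e' \<in> edges B" using e(2) by simp
    qed
    show "edges B \<subseteq> (\<lambda>e. f ` e) ` edges A"
    proof
      fix e' assume e': "e' \<in> edges B"
      then obtain x y where xy: "e' = {x,y}" "x \<in> verts B" "y \<in> verts B" using simple_edgeD[OF assms(3)] by blast
      have im: "verts B = f ` verts A" using f(1) by (simp add: bij_betw_def)
      obtain u where u: "u \<in> verts A" "x = f u" using xy(2) unfolding im by blast
      obtain v where v: "v \<in> verts A" "y = f v" using xy(3) unfolding im by blast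
      have uv: "u \<in> verts A" "v \<in> verts A" "x = f u" "y = f v" using u v by auto
      then have "{u,v} \<in> edges A" using f(2) e' xy by auto
      moreover have "e' = f ` {u,v}" using xy uv by simp
      ultimately show "e' \<in> (\<lambda>e. f ` e) ` edges A" by (rule rev_image_eqI)
    qed
  qed
  moreover have "inj_on (\<lambda>e. f ` e) (edges A)"
  proof (rule inj_onI)
    fix e1 e2 assume e12: "e1 \<in> edges A" "e2 \<in> edges A" "f ` e1 = f ` e2"
    have "inj_on f (verts A)" using f(1) by (auto simp: bij_betw_def)
    from inj_on_image_eq_iff[OF this simple_edge_sub[OF assms(2) e12(1)] simple_edge_sub[OF assms(2) e12(2)]]
    show "e1 = e2" using e12(3) by simp
  qed
  ultimately show ?thesis by (simp add: card_image)
qed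

definition enc :: "'a graph \<Rightarrow> 'a \<Rightarrow> nat" where
  "enc G = (SOME f. inj_on f (verts G))"

definition natcopy :: "'a graph \<Rightarrow> nat graph" where
  "natcopy G = (enc G ` verts G, (\<lambda>e. enc G ` e) ` edges G)"

lemma enc_inj: "finite (verts G) \<Longrightarrow> inj_on (enc G) (verts G)"
proof -
  assume "finite (verts G)"
  then obtain f :: "_ \<Rightarrow> nat" and n where "f ` verts G = {i. i < n} \<and> inj_on f (verts G)"
    using finite_imp_inj_to_nat_seg by blast
  then have "\<exists>f :: _ \<Rightarrow> nat. inj_on f (verts G)" by blast
  then show ?thesis unfolding enc_def by (rule someI_ex)
qed

lemma verts_natcopy: "verts (natcopy G) = enc G ` verts G"
  by (simp add: natcopy_def verts_def)

lemma edges_natcopy: "edges (natcopy G) = (\<lambda>e. enc G ` e) ` edges G"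
  by (simp add: natcopy_def edges_def)

lemma natcopy_simple:
  assumes "simple_graph G" shows "simple_graph (natcopy G)"
proof -
  have inj: "inj_on (enc G) (verts G)" using enc_inj simple_finite assms by blast
  have "finite (verts (natcopy G))" using simple_finite[OF assms] by (simp add: verts_natcopy)
  moreover have "\<forall>e\<in>edges (natcopy G). e \<subseteq> verts (natcopy G) \<and> card e = 2"
  proof
    fix e' assume "e' \<in> edges (natcopy G)"
    then obtain e where e: "e \<in> edges G" "e' = enc G ` e" by (auto simp: edges_natcopy)
    then have "e \<subseteq> verts G" "card e = 2" using simple_edge_sub[OF assms e(1)] simple_edge_card[OF assms e(1)] by auto
    then show "e' \<subseteq> verts (natcopy G) \<and> card e' = 2"
      using inj e by (auto simp: verts_natcopy card_image inj_on_subset)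
  qed
  ultimately show ?thesis unfolding simple_graph_def by blast
qed

lemma natcopy_iso:
  assumes "simple_graph G" shows "graph_iso G (natcopy G)"
proof -
  have inj: "inj_on (enc G) (verts G)" using enc_inj simple_finite assms by blast
  have "bij_betw (enc G) (verts G) (verts (natcopy G))"
    using inj by (simp add: verts_natcopy bij_betw_def)
  moreover have "\<forall>u\<in>verts G. \<forall>v\<in>verts G. {u, v} \<in> edges G \<longleftrightarrow> {enc G u, enc G v} \<in> edges (natcopy G)"
  proof (intro ballI iffI)
    fix u v assume "u \<in> verts G" "v \<in> verts G" "{u,v} \<in> edges G"
    then have "enc G ` {u,v} \<in> (\<lambda>e. enc G ` e) ` edges G" by blast
    then show "{enc G u, enc G v} \<in> edges (natcopy G)" by (simp add: edges_natcopy)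
  next
    fix u v assume uv: "u \<in> verts G" "v \<in> verts G" "{enc G u, enc G v} \<in> edges (natcopy G)"
    then obtain e where e: "e \<in> edges G" "enc G ` e = {enc G u, enc G v}"
      by (auto simp: edges_natcopy)
    have es: "e \<subseteq> verts G" using simple_edge_sub[OF assms e(1)] .
    have "enc G ` e = enc G ` {u,v}" "{u,v} \<subseteq> verts G" using e uv by auto
    then have "e = {u,v}" using inj_on_image_eq_iff[OF inj es \<open>{u,v} \<subseteq> verts G\<close>] by simp
    then show "{u,v} \<in> edges G" using e by simp
  qed
  ultimately show ?thesis unfolding graph_iso_def by blast
qed

definition tensor :: "nat graph \<Rightarrow> nat graph \<Rightarrow> nat graph" where
  "tensor G T = ((\<lambda>(g,t). prod_encode (g,t)) ` (verts G \<times> verts T),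
     {{prod_encode (g,t), prod_encode (g',t')} | g t g' t'. {g,g'} \<in> edges G \<and> {t,t'} \<in> edges T})"

lemma verts_tensor: "verts (tensor G T) = (\<lambda>(g,t). prod_encode (g,t)) ` (verts G \<times> verts T)"
  by (simp add: tensor_def verts_def)

lemma edges_tensor: "edges (tensor G T) =
   {{prod_encode (g,t), prod_encode (g',t')} | g t g' t'. {g,g'} \<in> edges G \<and> {t,t'} \<in> edges T}"
  by (simp add: tensor_def edges_def)

lemma edge_pair:
  assumes "simple_graph G" "{a, b} \<in> edges G"
  shows "a \<noteq> b" "a \<in> verts G" "b \<in> verts G"
proof -
  have "card {a,b} = 2" using simple_edge_card[OF assms] .
  then show "a \<noteq> b" by (cases "a = b") auto
  show "a \<in> verts G" "b \<in> verts G" using simple_edge_sub[OF assms] by auto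
qed

lemma tensor_simple:
  assumes "simple_graph G" "simple_graph T"
  shows "simple_graph (tensor G T)"
proof -
  have "finite (verts (tensor G T))"
    using simple_finite[OF assms(1)] simple_finite[OF assms(2)] by (simp add: verts_tensor)
  moreover have "\<forall>e\<in>edges (tensor G T). e \<subseteq> verts (tensor G T) \<and> card e = 2"
  proof
    fix e assume "e \<in> edges (tensor G T)"
    then obtain g t g' t' where e: "e = {prod_encode (g,t), prod_encode (g',t')}"
      "{g,g'} \<in> edges G" "{t,t'} \<in> edges T" by (auto simp: edges_tensor)
    have "g \<noteq> g'" "g \<in> verts G" "g' \<in> verts G" using edge_pair[OF assms(1) e(2)] by auto
    moreover have "t \<in> verts T" "t' \<in> verts T" using edge_pair[OF assms(2) e(3)] by auto
    ultimately have "prod_encode (g,t) \<noteq> prod_encode (g',t')"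
      "prod_encode (g,t) \<in> verts (tensor G T)" "prod_encode (g',t') \<in> verts (tensor G T)"
      by (auto simp: verts_tensor prod_encode_eq)
    then show "e \<subseteq> verts (tensor G T) \<and> card e = 2" using e(1) by auto
  qed
  ultimately show ?thesis unfolding simple_graph_def by blast
qed

lemma doubleton_eq: "{a, b} = {c, d} \<longleftrightarrow> (a = c \<and> b = d) \<or> (a = d \<and> b = c)"
  by (rule doubleton_eq_iff)

lemma hom_tensor:
  assumes "simple_graph F"
  shows "hom F (tensor G T) = hom F G * hom F T"
proof -
  let ?V = "verts F"
  let ?P = "\<lambda>(a, b). restrict (\<lambda>v. prod_encode (a v, b v)) ?V"
  let ?Q = "\<lambda>h. (restrict (\<lambda>v. fst (prod_decode (h v))) ?V, restrict (\<lambda>v. snd (prod_decode (h v))) ?V)"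
  have "bij_betw ?P (homs F G \<times> homs F T) (homs F (tensor G T))"
  proof (rule bij_betw_byWitness[where f'="?Q"])
    show "\<forall>ab\<in>homs F G \<times> homs F T. ?Q (?P ab) = ab"
    proof
      fix ab assume ab: "ab \<in> homs F G \<times> homs F T"
      obtain a b where ab': "ab = (a, b)" by (cases ab)
      have a: "a \<in> ?V \<rightarrow>\<^sub>E verts G" and b: "b \<in> ?V \<rightarrow>\<^sub>E verts T" using ab ab' unfolding homs_def by auto
      have "restrict (\<lambda>v. fst (prod_decode (?P ab v))) ?V = a"
      proof
        fix x show "restrict (\<lambda>v. fst (prod_decode (?P ab v))) ?V x = a x"
          using a by (cases "x \<in> ?V") (auto simp: ab' PiE_def extensional_def)
      qed
      moreover have "restrict (\<lambda>v. snd (prod_decode (?P ab v))) ?V = b"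
      proof
        fix x show "restrict (\<lambda>v. snd (prod_decode (?P ab v))) ?V x = b x"
          using b by (cases "x \<in> ?V") (auto simp: ab' PiE_def extensional_def)
      qed
      ultimately show "?Q (?P ab) = ab" using ab' by simp
    qed
    show "\<forall>h\<in>homs F (tensor G T). ?P (?Q h) = h"
    proof
      fix h assume "h \<in> homs F (tensor G T)"
      then have h: "h \<in> ?V \<rightarrow>\<^sub>E verts (tensor G T)" unfolding homs_def by auto
      show "?P (?Q h) = h"
      proof
        fix x show "?P (?Q h) x = h x"
          using h by (cases "x \<in> ?V") (auto simp: PiE_def extensional_def)
      qed
    qed
    show "?P ` (homs F G \<times> homs F T) \<subseteq> homs F (tensor G T)"
    proof
      fix h assume "h \<in> ?P ` (homs F G \<times> homs F T)"
      then obtain a b where ab: "a \<in> homs F G" "b \<in> homs F T" "h = ?P (a, b)" by blast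
      have a: "a \<in> ?V \<rightarrow>\<^sub>E verts G" and b: "b \<in> ?V \<rightarrow>\<^sub>E verts T" using ab unfolding homs_def by auto
      have "h \<in> ?V \<rightarrow>\<^sub>E verts (tensor G T)"
      proof (rule PiE_I)
        fix x assume x: "x \<in> ?V"
        have "a x \<in> verts G" "b x \<in> verts T" using a b x by auto
        then have "(a x, b x) \<in> verts G \<times> verts T" by simp
        then have "(\<lambda>(g,t). prod_encode (g,t)) (a x, b x) \<in> verts (tensor G T)"
          unfolding verts_tensor by (rule imageI)
        then show "h x \<in> verts (tensor G T)" using ab(3) x by simp
      next
        fix x assume "x \<notin> ?V" then show "h x = undefined" using ab(3) by simp
      qed
      moreover have "\<forall>u\<in>?V. \<forall>v\<in>?V. {u, v} \<in> edges F \<longrightarrow> {h u, h v} \<in> edges (tensor G T)"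
      proof (intro ballI impI)
        fix u v assume uv: "u \<in> ?V" "v \<in> ?V" "{u, v} \<in> edges F"
        have "{a u, a v} \<in> edges G" "{b u, b v} \<in> edges T" using ab(1,2) uv unfolding homs_def by auto
        then show "{h u, h v} \<in> edges (tensor G T)" using uv ab(3) by (auto simp: edges_tensor)
      qed
      ultimately show "h \<in> homs F (tensor G T)" unfolding homs_def by blast
    qed
    show "?Q ` homs F (tensor G T) \<subseteq> homs F G \<times> homs F T"
    proof
      fix ab assume "ab \<in> ?Q ` homs F (tensor G T)"
      then obtain h where h: "h \<in> homs F (tensor G T)" "ab = ?Q h" by blast
      have hP: "h \<in> ?V \<rightarrow>\<^sub>E verts (tensor G T)" using h unfolding homs_def by auto
      have hv: "\<And>v. v \<in> ?V \<Longrightarrow> fst (prod_decode (h v)) \<in> verts G \<and> snd (prod_decode (h v)) \<in> verts T"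
      proof -
        fix v assume "v \<in> ?V"
        then have "h v \<in> (\<lambda>(g,t). prod_encode (g,t)) ` (verts G \<times> verts T)" using hP by (auto simp: verts_tensor)
        then show "fst (prod_decode (h v)) \<in> verts G \<and> snd (prod_decode (h v)) \<in> verts T" by auto
      qed
      have he: "{fst (prod_decode (h u)), fst (prod_decode (h v))} \<in> edges G \<and>
                {snd (prod_decode (h u)), snd (prod_decode (h v))} \<in> edges T"
        if uv: "u \<in> ?V" "v \<in> ?V" "{u, v} \<in> edges F" for u v
      proof -
        have "{h u, h v} \<in> edges (tensor G T)" using h(1) uv unfolding homs_def by auto
        then obtain g t g' t' where gt: "{h u, h v} = {prod_encode (g,t), prod_encode (g',t')}"
          "{g,g'} \<in> edges G" "{t,t'} \<in> edges T" by (auto simp: edges_tensor)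
        from gt(1) have "(h u = prod_encode (g,t) \<and> h v = prod_encode (g',t')) \<or>
                         (h u = prod_encode (g',t') \<and> h v = prod_encode (g,t))"
          by (simp add: doubleton_eq_iff)
        then show ?thesis
        proof
          assume "h u = prod_encode (g,t) \<and> h v = prod_encode (g',t')"
          then show ?thesis using gt by simp
        next
          assume "h u = prod_encode (g',t') \<and> h v = prod_encode (g,t)"
          then show ?thesis using gt by (simp add: insert_commute)
        qed
      qed
      have "fst ab \<in> ?V \<rightarrow>\<^sub>E verts G"
      proof (rule PiE_I)
        fix x assume "x \<in> ?V" then show "fst ab x \<in> verts G" using hv h(2) by simp
      next
        fix x assume "x \<notin> ?V" then show "fst ab x = undefined" using h(2) by simp
      qed
      moreover have "\<forall>u\<in>?V. \<forall>v\<in>?V. {u, v} \<in> edges F \<longrightarrow> {fst ab u, fst ab v} \<in> edges G"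
        using he h(2) by simp
      ultimately have "fst ab \<in> homs F G" unfolding homs_def by blast
      have "snd ab \<in> ?V \<rightarrow>\<^sub>E verts T"
      proof (rule PiE_I)
        fix x assume "x \<in> ?V" then show "snd ab x \<in> verts T" using hv h(2) by simp
      next
        fix x assume "x \<notin> ?V" then show "snd ab x = undefined" using h(2) by simp
      qed
      moreover have "\<forall>u\<in>?V. \<forall>v\<in>?V. {u, v} \<in> edges F \<longrightarrow> {snd ab u, snd ab v} \<in> edges T"
        using he h(2) by simp
      ultimately have "snd ab \<in> homs F T" unfolding homs_def by blast
      with \<open>fst ab \<in> homs F G\<close> show "ab \<in> homs F G \<times> homs F T" by (simp add: mem_Times_iff)
    qed
  qed
  from bij_betw_same_card[OF this] have "card (homs F (tensor G T)) = card (homs F G \<times> homs F T)" by simp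
  then show ?thesis unfolding hom_def by (simp add: card_cartesian_product)
qed

lemma hom_equiv_tensor:
  assumes "hom_equiv \<F> G H" "\<forall>F\<in>\<F>. simple_graph F"
  shows "hom_equiv \<F> (tensor G T) (tensor H T)"
  using assms unfolding hom_equiv_def by (simp add: hom_tensor)

declare split_paired_All[simp del] split_paired_Ex[simp del]

definition epis :: "'a graph \<Rightarrow> 'b graph \<Rightarrow> ('a \<Rightarrow> 'b) set" where
  "epis F T = {f \<in> homs F T. f ` verts F = verts T \<and> (\<lambda>e. f ` e) ` edges F = edges T}"

definition img :: "'a graph \<Rightarrow> ('a \<Rightarrow> 'b) \<Rightarrow> 'b graph" where
  "img F f = (f ` verts F, (\<lambda>e. f ` e) ` edges F)"

definition subs :: "'b graph \<Rightarrow> 'b graph set" where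
  "subs T = {S. subgraph S T}"

lemma graph_eq: "G = (verts G, edges G)" by (simp add: verts_def edges_def)

lemma graph_eqI: "verts G = verts H \<Longrightarrow> edges G = edges H \<Longrightarrow> G = H"
  by (simp add: verts_def edges_def prod_eq_iff)

lemma verts_img: "verts (img F f) = f ` verts F" by (simp add: img_def verts_def)
lemma edges_img: "edges (img F f) = (\<lambda>e. f ` e) ` edges F" by (simp add: img_def edges_def)

lemma subs_finite:
  assumes "simple_graph T" shows "finite (subs T)"
proof -
  have "subs T \<subseteq> Pow (verts T) \<times> Pow (edges T)"
  proof
    fix S assume "S \<in> subs T"
    then have "verts S \<subseteq> verts T" "edges S \<subseteq> edges T" by (auto simp: subs_def subgraph_def)
    then have "(verts S, edges S) \<in> Pow (verts T) \<times> Pow (edges T)" by simp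
    then show "S \<in> Pow (verts T) \<times> Pow (edges T)" using graph_eq[of S] by simp
  qed
  moreover have "finite (Pow (verts T) \<times> Pow (edges T))"
    using simple_finite[OF assms] simple_finite_edges[OF assms] by simp
  ultimately show ?thesis by (rule finite_subset)
qed

lemma sub_simple:
  assumes "simple_graph T" "subgraph S T" shows "simple_graph S"
proof -
  have "finite (verts S)" using assms simple_finite[OF assms(1)] unfolding subgraph_def
    by (meson finite_subset)
  moreover have "\<forall>e\<in>edges S. e \<subseteq> verts S \<and> card e = 2"
  proof
    fix e assume e: "e \<in> edges S"
    then have "e \<in> edges T" using assms(2) unfolding subgraph_def by blast
    then have "card e = 2" using simple_edge_card[OF assms(1)] by blast
    moreover have "e \<subseteq> verts S" using assms(2) e unfolding subgraph_def by blast
    ultimately show "e \<subseteq> verts S \<and> card e = 2" by blast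
  qed
  ultimately show ?thesis unfolding simple_graph_def by blast
qed

lemma epis_img: "f \<in> epis F S \<Longrightarrow> S = img F f"
  unfolding epis_def by (rule graph_eqI) (auto simp: verts_img edges_img)

lemma epis_sub_homs: "epis F S \<subseteq> homs F S"
  unfolding epis_def by blast

lemma homs_decomp:
  assumes F: "simple_graph F" and T: "simple_graph T"
  shows "homs F T = (\<Union>S\<in>subs T. epis F S)"
proof
  show "homs F T \<subseteq> (\<Union>S\<in>subs T. epis F S)"
  proof
    fix f assume f: "f \<in> homs F T"
    have fP: "f \<in> verts F \<rightarrow>\<^sub>E verts T" and fE: "\<forall>e\<in>edges F. f ` e \<in> edges T"
      using f homs_alt[OF F, of T] by auto
    have "subgraph (img F f) T"
      unfolding subgraph_def verts_img edges_img
    proof (intro conjI)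
      show "f ` verts F \<subseteq> verts T" using fP by auto
      show "(\<lambda>e. f ` e) ` edges F \<subseteq> edges T" using fE by auto
      show "\<forall>e\<in>(\<lambda>e. f ` e) ` edges F. e \<subseteq> f ` verts F"
        using simple_edge_sub[OF F] by auto
    qed
    then have s: "img F f \<in> subs T" by (simp add: subs_def)
    have "f \<in> homs F (img F f)"
    proof -
      have "f \<in> verts F \<rightarrow>\<^sub>E verts (img F f)" using fP by (auto simp: verts_img PiE_def)
      moreover have "\<forall>e\<in>edges F. f ` e \<in> edges (img F f)" by (simp add: edges_img)
      ultimately show ?thesis using homs_alt[OF F] by blast
    qed
    then have "f \<in> epis F (img F f)" unfolding epis_def by (simp add: verts_img edges_img)
    then show "f \<in> (\<Union>S\<in>subs T. epis F S)" using s by blast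
  qed
  show "(\<Union>S\<in>subs T. epis F S) \<subseteq> homs F T"
  proof
    fix f assume "f \<in> (\<Union>S\<in>subs T. epis F S)"
    then obtain S where S: "S \<in> subs T" "f \<in> epis F S" by blast
    then have fS: "f \<in> homs F S" using epis_sub_homs by blast
    have sub: "verts S \<subseteq> verts T" "edges S \<subseteq> edges T" using S(1) by (auto simp: subs_def subgraph_def)
    have "f \<in> verts F \<rightarrow>\<^sub>E verts T" using fS sub unfolding homs_def by auto
    moreover have "\<forall>e\<in>edges F. f ` e \<in> edges T" using fS sub homs_alt[OF F, of S] by auto
    ultimately show "f \<in> homs F T" using homs_alt[OF F, of T] by blast
  qed
qed

lemma hom_sum_epis:
  assumes F: "simple_graph F" and T: "simple_graph T"
  shows "hom F T = (\<Sum>S\<in>subs T. card (epis F S))"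
proof -
  have fin: "\<forall>S\<in>subs T. finite (epis F S)"
  proof
    fix S assume "S \<in> subs T"
    then have "simple_graph S" using sub_simple[OF T] by (simp add: subs_def)
    then have "finite (homs F S)" using homs_finite[OF simple_finite[OF F] simple_finite[OF \<open>simple_graph S\<close>]] by simp
    then show "finite (epis F S)" using epis_sub_homs finite_subset by blast
  qed
  have disj: "\<forall>S\<in>subs T. \<forall>S'\<in>subs T. S \<noteq> S' \<longrightarrow> epis F S \<inter> epis F S' = {}"
  proof (intro ballI impI)
    fix S S' assume "S \<in> subs T" "S' \<in> subs T" "S \<noteq> S'"
    show "epis F S \<inter> epis F S' = {}"
    proof (rule ccontr)
      assume "epis F S \<inter> epis F S' \<noteq> {}"
      then obtain f where f: "f \<in> epis F S" "f \<in> epis F S'" by blast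
      have "S = img F f" "S' = img F f" using epis_img[OF f(1)] epis_img[OF f(2)] by auto
      then show False using \<open>S \<noteq> S'\<close> by simp
    qed
  qed
  show ?thesis unfolding hom_def homs_decomp[OF F T]
    using card_UN_disjoint[OF subs_finite[OF T] fin disj] .
qed

lemma sub_refl: "simple_graph T \<Longrightarrow> T \<in> subs T"
proof -
  assume T: "simple_graph T"
  have "\<forall>e\<in>edges T. e \<subseteq> verts T" using simple_edge_sub[OF T] by blast
  then show ?thesis unfolding subs_def subgraph_def by simp
qed

lemma epis_eq:
  fixes F F' T :: "nat graph"
  assumes F: "simple_graph F" and F': "simple_graph F'"
    and h: "\<forall>T::nat graph. simple_graph T \<longrightarrow> hom F T = hom F' T"
  shows "simple_graph T \<Longrightarrow> card (epis F T) = card (epis F' T)"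
proof (induction T rule: measure_induct_rule[where f="\<lambda>T. card (verts T) + card (edges T)"])
  case (less T)
  have T: "simple_graph T" by fact
  have eqs: "(\<Sum>S\<in>subs T - {T}. card (epis F S)) = (\<Sum>S\<in>subs T - {T}. card (epis F' S))"
  proof (rule sum.cong[OF refl])
    fix S assume S: "S \<in> subs T - {T}"
    then have sub: "subgraph S T" "S \<noteq> T" by (auto simp: subs_def)
    then have Ss: "simple_graph S" using sub_simple[OF T] by blast
    have vs: "verts S \<subseteq> verts T" "edges S \<subseteq> edges T" using sub(1) unfolding subgraph_def by auto
    have finV: "finite (verts T)" and finE: "finite (edges T)"
      using simple_finite[OF T] simple_finite_edges[OF T] by auto
    have "verts S \<noteq> verts T \<or> edges S \<noteq> edges T" using sub(2) graph_eqI by blast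
    then have "card (verts S) < card (verts T) \<or> card (edges S) < card (edges T)"
      using vs finV finE psubset_card_mono by (metis psubsetI)
    moreover have "card (verts S) \<le> card (verts T)" "card (edges S) \<le> card (edges T)"
      using vs finV finE card_mono by auto
    ultimately have "card (verts S) + card (edges S) < card (verts T) + card (edges T)" by linarith
    then show "card (epis F S) = card (epis F' S)" using less.IH Ss by blast
  qed
  have fs: "finite (subs T)" using subs_finite[OF T] .
  have "hom F T = card (epis F T) + (\<Sum>S\<in>subs T - {T}. card (epis F S))"
    using hom_sum_epis[OF F T] sum.remove[OF fs sub_refl[OF T]] by simp
  moreover have "hom F' T = card (epis F' T) + (\<Sum>S\<in>subs T - {T}. card (epis F' S))"
    using hom_sum_epis[OF F' T] sum.remove[OF fs sub_refl[OF T]] by simp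
  ultimately show ?case using h[rule_format, OF T] eqs by simp
qed

lemma id_epi:
  assumes F: "simple_graph F"
  shows "restrict id (verts F) \<in> epis F F"
proof -
  let ?i = "restrict id (verts F)"
  have ie: "\<And>e. e \<in> edges F \<Longrightarrow> ?i ` e = e"
  proof -
    fix e assume "e \<in> edges F"
    then have "e \<subseteq> verts F" using simple_edge_sub[OF F] by blast
    then show "?i ` e = e" by auto
  qed
  have "?i \<in> verts F \<rightarrow>\<^sub>E verts F" by auto
  moreover have "\<forall>e\<in>edges F. ?i ` e \<in> edges F" using ie by simp
  ultimately have "?i \<in> homs F F" using homs_alt[OF F] by blast
  moreover have "?i ` verts F = verts F" by auto
  moreover have "(\<lambda>e. ?i ` e) ` edges F = edges F"
  proof -
    have "(\<lambda>e. ?i ` e) ` edges F = (\<lambda>e. e) ` edges F" using ie by (intro image_cong) auto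
    then show ?thesis by simp
  qed
  ultimately show ?thesis unfolding epis_def by blast
qed

lemma epis_finite: "simple_graph F \<Longrightarrow> simple_graph T \<Longrightarrow> finite (epis F T)"
  using epis_sub_homs homs_finite simple_finite finite_subset by metis

lemma epi_cards:
  assumes F: "simple_graph F" and T: "simple_graph T" and f: "f \<in> epis F T"
  shows "card (verts T) \<le> card (verts F)" "card (edges T) \<le> card (edges F)"
proof -
  have "verts T = f ` verts F" "edges T = (\<lambda>e. f ` e) ` edges F" using f unfolding epis_def by auto
  then show "card (verts T) \<le> card (verts F)" "card (edges T) \<le> card (edges F)"
    using card_image_le simple_finite[OF F] simple_finite_edges[OF F] by auto
qed

lemma lovasz:
  fixes F F' :: "nat graph"
  assumes F: "simple_graph F" and F': "simple_graph F'"
    and h: "\<forall>T::nat graph. simple_graph T \<longrightarrow> hom F T = hom F' T"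
  shows "graph_iso F F'"
proof -
  have h': "\<forall>T::nat graph. simple_graph T \<longrightarrow> hom F' T = hom F T" using h by simp
  have e1: "epis F' F' \<noteq> {}" using id_epi[OF F'] by blast
  have "card (epis F' F') > 0" using e1 epis_finite[OF F' F'] by (simp add: card_gt_0_iff)
  then have "card (epis F F') > 0" using epis_eq[OF F F' h F'] by simp
  then have "epis F F' \<noteq> {}" by (simp add: card_gt_0_iff)
  then obtain f where f: "f \<in> epis F F'" by blast
  have e2: "epis F F \<noteq> {}" using id_epi[OF F] by blast
  have "card (epis F F) > 0" using e2 epis_finite[OF F F] by (simp add: card_gt_0_iff)
  then have "card (epis F' F) > 0" using epis_eq[OF F' F h' F] by simp
  then have "epis F' F \<noteq> {}" by (simp add: card_gt_0_iff)
  then obtain g where g: "g \<in> epis F' F" by blast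
  have cv: "card (verts F) = card (verts F')" using epi_cards[OF F F' f] epi_cards[OF F' F g] by simp
  have fall: "f \<in> homs F F' \<and> f ` verts F = verts F' \<and> (\<lambda>e. f ` e) ` edges F = edges F'"
    using f by (simp add: epis_def)
  then have fV: "f ` verts F = verts F'" and fE: "(\<lambda>e. f ` e) ` edges F = edges F'" and fh: "f \<in> homs F F'"
    by auto
  have "card (f ` verts F) = card (verts F)" using cv fV by simp
  then have inj: "inj_on f (verts F)" using inj_on_iff_eq_card[OF simple_finite[OF F]] by blast
  have bij: "bij_betw f (verts F) (verts F')" using inj fV by (simp add: bij_betw_def)
  have "\<forall>u\<in>verts F. \<forall>v\<in>verts F. {u, v} \<in> edges F \<longleftrightarrow> {f u, f v} \<in> edges F'"
  proof (intro ballI iffI)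
    fix u v assume "u \<in> verts F" "v \<in> verts F" "{u, v} \<in> edges F"
    then show "{f u, f v} \<in> edges F'" using fh unfolding homs_def by blast
  next
    fix u v assume uv: "u \<in> verts F" "v \<in> verts F" "{f u, f v} \<in> edges F'"
    then have "{f u, f v} \<in> (\<lambda>e. f ` e) ` edges F" using fE by simp
    then obtain e where e: "e \<in> edges F" "f ` e = {f u, f v}" by blast
    have es: "e \<subseteq> verts F" using simple_edge_sub[OF F e(1)] .
    have uvs: "{u,v} \<subseteq> verts F" using uv by auto
    have "f ` e = f ` {u,v}" using e(2) by simp
    then have "e = {u,v}" using inj_on_image_eq_iff[OF inj es uvs] by simp
    then show "{u, v} \<in> edges F" using e(1) by simp
  qed
  then show ?thesis using bij unfolding graph_iso_def by blast
qed

definition rel_of :: "'a set set \<Rightarrow> ('a \<times> 'a) set" where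
  "rel_of B = {(x,y). {x,y} \<in> B}"

definition eqr :: "'a set \<Rightarrow> 'a set set \<Rightarrow> ('a \<times> 'a) set" where
  "eqr V B = {(x,y). x \<in> V \<and> y \<in> V \<and> (x,y) \<in> (rel_of B)\<^sup>*}"

definition comps :: "'a set \<Rightarrow> 'a set set \<Rightarrow> 'a set set" where
  "comps V B = V // eqr V B"

lemma sym_rel_of: "sym (rel_of B)"
  unfolding sym_def rel_of_def by (auto simp: insert_commute)

lemma equiv_eqr: "equiv V (eqr V B)"
proof (rule equivI)
  show "eqr V B \<subseteq> V \<times> V" unfolding eqr_def by auto
  show "refl_on V (eqr V B)" unfolding refl_on_def eqr_def by auto
  show "sym (eqr V B)"
  proof (rule symI)
    fix x y assume "(x,y) \<in> eqr V B"
    then have xy: "x \<in> V" "y \<in> V" "(x,y) \<in> (rel_of B)\<^sup>*" unfolding eqr_def by auto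
    have "(y,x) \<in> (rel_of B)\<^sup>*" using symD[OF sym_rtrancl[OF sym_rel_of] xy(3)] .
    then show "(y,x) \<in> eqr V B" using xy unfolding eqr_def by auto
  qed
  show "trans (eqr V B)"
  proof (rule transI)
    fix x y z assume "(x,y) \<in> eqr V B" "(y,z) \<in> eqr V B"
    then show "(x,z) \<in> eqr V B" unfolding eqr_def by (auto intro: rtrancl_trans)
  qed
qed

lemma partition_comps: "partition_on V (comps V B)"
  unfolding comps_def by (rule partition_on_quotient[OF equiv_eqr])

definition cls :: "'a set \<Rightarrow> 'a set set \<Rightarrow> 'a \<Rightarrow> 'a set" where
  "cls V B x = eqr V B `` {x}"

lemma cls_in: "x \<in> V \<Longrightarrow> cls V B x \<in> comps V B"
  unfolding cls_def comps_def by (rule quotientI)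

lemma cls_self: "x \<in> V \<Longrightarrow> x \<in> cls V B x"
  unfolding cls_def by (rule equiv_class_self[OF equiv_eqr])

lemma cls_eq_iff: "x \<in> V \<Longrightarrow> y \<in> V \<Longrightarrow> cls V B x = cls V B y \<longleftrightarrow> (x, y) \<in> eqr V B"
  unfolding cls_def by (rule eq_equiv_class_iff[OF equiv_eqr])

lemma comps_sub: "A \<in> comps V B \<Longrightarrow> A \<subseteq> V"
  unfolding comps_def by (rule in_quotient_imp_subset[OF equiv_eqr])

lemma comps_ne: "A \<in> comps V B \<Longrightarrow> A \<noteq> {}"
  unfolding comps_def by (rule in_quotient_imp_non_empty[OF equiv_eqr])

lemma comps_cls: "A \<in> comps V B \<Longrightarrow> a \<in> A \<Longrightarrow> cls V B a = A"
proof -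
  assume A: "A \<in> comps V B" and a: "a \<in> A"
  obtain x where x: "A = eqr V B `` {x}" "x \<in> V" using A unfolding comps_def by (rule quotientE)
  have "(x, a) \<in> eqr V B" using a x by auto
  then have "eqr V B `` {x} = eqr V B `` {a}" by (rule equiv_class_eq[OF equiv_eqr])
  then show ?thesis using x by (simp add: cls_def)
qed

lemma finite_comps: "finite V \<Longrightarrow> finite (comps V B)"
proof -
  assume "finite V"
  have "comps V B \<subseteq> Pow V" using comps_sub by blast
  then show ?thesis using \<open>finite V\<close> by (meson finite_Pow_iff finite_subset)
qed

lemma eqr_const:
  assumes "\<forall>e\<in>B. card (g ` e) = 1" "(x, y) \<in> eqr V B"
  shows "g x = g y"
proof -
  have "(x, y) \<in> (rel_of B)\<^sup>*" using assms(2) unfolding eqr_def by auto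
  then show ?thesis
  proof (induction rule: rtrancl_induct)
    case base then show ?case by simp
  next
    case (step y z)
    then have "{y, z} \<in> B" unfolding rel_of_def by auto
    then have "card (g ` {y, z}) = 1" using assms(1) by blast
    then have "g y = g z" by (cases "g y = g z") auto
    then show ?case using step.IH by simp
  qed
qed

lemma edge_in_eqr:
  assumes "{u, v} \<in> B" "u \<in> V" "v \<in> V"
  shows "(u, v) \<in> eqr V B"
  using assms unfolding eqr_def rel_of_def by auto

definition Nset :: "'a set \<Rightarrow> 'b graph \<Rightarrow> 'a set set \<Rightarrow> 'a set set \<Rightarrow> ('a \<Rightarrow> 'b) set" where
  "Nset V G Ea Eb = {f \<in> V \<rightarrow>\<^sub>E verts G. (\<forall>e\<in>Ea. card (f ` e) = 1) \<and> (\<forall>e\<in>Eb. f ` e \<in> edges G)}"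

definition valid :: "'a set \<Rightarrow> 'a set set \<Rightarrow> 'a set set \<Rightarrow> bool" where
  "valid V Ea Eb \<longleftrightarrow> (\<forall>e\<in>Eb. \<forall>x\<in>e. \<forall>y\<in>e. (x, y) \<in> eqr V Ea \<longrightarrow> x = y)"

lemma two_set: "card e = 2 \<Longrightarrow> \<exists>u v. u \<noteq> v \<and> e = {u, v}"
  by (auto simp: card_2_iff)

lemma Nset_invalid:
  assumes G: "simple_graph G" and hB: "\<forall>e\<in>Eb. card e = 2" and nv: "\<not> valid V Ea Eb"
  shows "Nset V G Ea Eb = {}"
proof (rule ccontr)
  assume "Nset V G Ea Eb \<noteq> {}"
  then obtain f where f: "f \<in> Nset V G Ea Eb" by blast
  obtain e x y where e: "e \<in> Eb" "x \<in> e" "y \<in> e" "(x, y) \<in> eqr V Ea" "x \<noteq> y"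
    using nv unfolding valid_def by blast
  have fx: "f x = f y" using eqr_const[of Ea f x y V] f e(4) unfolding Nset_def by blast
  have "card e = 2" using hB e(1) by blast
  then obtain u v where uv: "u \<noteq> v" "e = {u, v}" using two_set by blast
  have "e = {x, y}" using uv e(2,3,5) by auto
  then have "f ` e = {f x}" using fx by auto
  moreover have "f ` e \<in> edges G" using f e(1) unfolding Nset_def by blast
  ultimately have "card {f x} = 2" using simple_edge_card[OF G] by metis
  then show False by simp
qed

lemma verts_quot: "verts (quotient_graph F P) = P"
  by (simp add: quotient_graph_def verts_def)

lemma edges_quot: "edges (quotient_graph F P) =
   {{A, B} | A B. A \<in> P \<and> B \<in> P \<and> A \<noteq> B \<and> (\<exists>a\<in>A. \<exists>b\<in>B. {a, b} \<in> edges F)}"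
  by (simp add: quotient_graph_def edges_def)

lemma verts_pair: "verts (V, E) = V" by (simp add: verts_def)
lemma edges_pair: "edges (V, E) = E" by (simp add: edges_def)

lemma Nset_valid:
  fixes V :: "'a set" and G :: "'b graph"
  assumes V: "finite V" and G: "simple_graph G"
    and hA: "\<forall>e\<in>Ea. e \<subseteq> V \<and> card e = 2" and hB: "\<forall>e\<in>Eb. e \<subseteq> V \<and> card e = 2"
    and vd: "valid V Ea Eb"
  shows "card (Nset V G Ea Eb) = hom (quotient_graph (V, Eb) (comps V Ea)) G"
proof -
  let ?P = "comps V Ea"
  let ?Q = "quotient_graph (V, Eb) ?P"
  let ?c = "cls V Ea"
  let ?N = "Nset V G Ea Eb"
  have vQ: "verts ?Q = ?P" by (rule verts_quot)
  have eQ: "edges ?Q = {{A, B} | A B. A \<in> ?P \<and> B \<in> ?P \<and> A \<noteq> B \<and> (\<exists>a\<in>A. \<exists>b\<in>B. {a, b} \<in> Eb)}"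
    by (simp add: edges_quot edges_pair)
  let ?Phi = "\<lambda>h. restrict (\<lambda>x. h (?c x)) V"
  let ?Psi = "\<lambda>g. restrict (\<lambda>A. g (SOME a. a \<in> A)) ?P"
  have some_in: "(SOME a. a \<in> A) \<in> A" if "A \<in> ?P" for A
  proof -
    have "A \<noteq> {}" using that by (rule comps_ne)
    then show ?thesis by (simp add: some_in_eq)
  qed
  have gc: "g b = g a" if "g \<in> ?N" "a \<in> V" "b \<in> ?c a" for g a b
  proof -
    have "(a, b) \<in> eqr V Ea" using that(3) unfolding cls_def by simp
    moreover have "\<forall>e\<in>Ea. card (g ` e) = 1" using that(1) unfolding Nset_def by blast
    ultimately show ?thesis using eqr_const[of Ea g a b V] by simp
  qed
  have gP: "g \<in> V \<rightarrow>\<^sub>E verts G" if "g \<in> ?N" for g using that unfolding Nset_def by blast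
  have hP: "h \<in> ?P \<rightarrow>\<^sub>E verts G" if "h \<in> homs ?Q G" for h using that unfolding homs_def vQ by blast
  have "bij_betw ?Phi (homs ?Q G) ?N"
  proof (rule bij_betw_byWitness[where f'="?Psi"])
    show "\<forall>h\<in>homs ?Q G. ?Psi (?Phi h) = h"
    proof
      fix h assume h: "h \<in> homs ?Q G"
      show "?Psi (?Phi h) = h"
      proof
        fix A show "?Psi (?Phi h) A = h A"
        proof (cases "A \<in> ?P")
          case True
          have s: "(SOME a. a \<in> A) \<in> A" using some_in[OF True] .
          have sV: "(SOME a. a \<in> A) \<in> V" using comps_sub[OF True] s by blast
          have "?c (SOME a. a \<in> A) = A" using comps_cls[OF True s] .
          then show ?thesis using True sV by simp
        next
          case False then show ?thesis using hP[OF h] by (simp add: PiE_def extensional_def)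
        qed
      qed
    qed
    show "\<forall>g\<in>?N. ?Phi (?Psi g) = g"
    proof
      fix g assume g: "g \<in> ?N"
      show "?Phi (?Psi g) = g"
      proof
        fix x show "?Phi (?Psi g) x = g x"
        proof (cases "x \<in> V")
          case True
          have cx: "?c x \<in> ?P" using cls_in[OF True] .
          have "g (SOME a. a \<in> ?c x) = g x" using gc[OF g True some_in[OF cx]] .
          then show ?thesis using True cx by simp
        next
          case False then show ?thesis using gP[OF g] by (simp add: PiE_def extensional_def)
        qed
      qed
    qed
    show "?Phi ` homs ?Q G \<subseteq> ?N"
    proof
      fix g assume "g \<in> ?Phi ` homs ?Q G"
      then obtain h where h: "h \<in> homs ?Q G" "g = ?Phi h" by blast
      have hh: "\<And>A B. A \<in> ?P \<Longrightarrow> B \<in> ?P \<Longrightarrow> {A, B} \<in> edges ?Q \<Longrightarrow> {h A, h B} \<in> edges G"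
        using h(1) unfolding homs_def vQ by blast
      have "g \<in> V \<rightarrow>\<^sub>E verts G"
      proof (rule PiE_I)
        fix x assume x: "x \<in> V"
        then have "?c x \<in> ?P" by (rule cls_in)
        then have "h (?c x) \<in> verts G" using hP[OF h(1)] by blast
        then show "g x \<in> verts G" using x h(2) by simp
      next
        fix x assume "x \<notin> V" then show "g x = undefined" using h(2) by simp
      qed
      moreover have "\<forall>e\<in>Ea. card (g ` e) = 1"
      proof
        fix e assume e: "e \<in> Ea"
        then have "card e = 2" "e \<subseteq> V" using hA by auto
        then obtain u v where uv: "u \<noteq> v" "e = {u, v}" "u \<in> V" "v \<in> V" using two_set by blast
        have "(u, v) \<in> eqr V Ea" using edge_in_eqr[of u v Ea V] e uv by simp
        then have "?c u = ?c v" using cls_eq_iff[OF uv(3) uv(4)] by simp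
        then have "g ` e = {h (?c u)}" using uv h(2) by auto
        then show "card (g ` e) = 1" by simp
      qed
      moreover have "\<forall>e\<in>Eb. g ` e \<in> edges G"
      proof
        fix e assume e: "e \<in> Eb"
        then have "card e = 2" "e \<subseteq> V" using hB by auto
        then obtain u v where uv: "u \<noteq> v" "e = {u, v}" "u \<in> V" "v \<in> V" using two_set by blast
        have uve: "u \<in> e" "v \<in> e" using uv(2) by auto
        have "(u, v) \<notin> eqr V Ea"
        proof
          assume "(u, v) \<in> eqr V Ea"
          from vd[unfolded valid_def, rule_format, OF e uve(1) uve(2) this] have "u = v" .
          with uv(1) show False by simp
        qed
        then have ne: "?c u \<noteq> ?c v" using cls_eq_iff[OF uv(3) uv(4)] by simp
        have cu: "?c u \<in> ?P" "?c v \<in> ?P" using cls_in[OF uv(3)] cls_in[OF uv(4)] by auto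
        have "u \<in> ?c u" "v \<in> ?c v" using cls_self[OF uv(3)] cls_self[OF uv(4)] by auto
        then have "{?c u, ?c v} \<in> edges ?Q" unfolding eQ using cu ne e uv(2) by blast
        then have "{h (?c u), h (?c v)} \<in> edges G" using hh cu by blast
        then show "g ` e \<in> edges G" using uv h(2) by simp
      qed
      ultimately show "g \<in> ?N" unfolding Nset_def by blast
    qed
    show "?Psi ` ?N \<subseteq> homs ?Q G"
    proof
      fix h assume "h \<in> ?Psi ` ?N"
      then obtain g where g: "g \<in> ?N" "h = ?Psi g" by blast
      have hA': "h A = g a" if "A \<in> ?P" "a \<in> A" for A a
      proof -
        have aV: "a \<in> V" using comps_sub[OF that(1)] that(2) by blast
        have cA: "?c a = A" using comps_cls[OF that] .
        have "g (SOME a. a \<in> A) = g a" using gc[OF g(1) aV] some_in[OF that(1)] cA by simp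
        then show ?thesis using that(1) g(2) by simp
      qed
      have "h \<in> ?P \<rightarrow>\<^sub>E verts G"
      proof (rule PiE_I)
        fix A assume A: "A \<in> ?P"
        have s: "(SOME a. a \<in> A) \<in> A" using some_in[OF A] .
        then have "(SOME a. a \<in> A) \<in> V" using comps_sub[OF A] by blast
        then have "g (SOME a. a \<in> A) \<in> verts G" using gP[OF g(1)] by blast
        then show "h A \<in> verts G" using A g(2) by simp
      next
        fix A assume "A \<notin> ?P" then show "h A = undefined" using g(2) by simp
      qed
      moreover have "\<forall>A\<in>?P. \<forall>B\<in>?P. {A, B} \<in> edges ?Q \<longrightarrow> {h A, h B} \<in> edges G"
      proof (intro ballI impI)
        fix A B assume AB: "A \<in> ?P" "B \<in> ?P" "{A, B} \<in> edges ?Q"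
        then obtain A' B' a b where ab: "{A, B} = {A', B'}" "A' \<in> ?P" "B' \<in> ?P" "a \<in> A'" "b \<in> B'" "{a, b} \<in> Eb"
          unfolding eQ by blast
        have "g ` {a, b} \<in> edges G" using g(1) ab(6) unfolding Nset_def by blast
        then have "{h A', h B'} \<in> edges G" using hA'[OF ab(2) ab(4)] hA'[OF ab(3) ab(5)] by simp
        moreover have "{h A, h B} = {h A', h B'}"
        proof -
          from ab(1) have "(A = A' \<and> B = B') \<or> (A = B' \<and> B = A')" by (simp add: doubleton_eq_iff)
          then show ?thesis by (auto simp: insert_commute)
        qed
        ultimately show "{h A, h B} \<in> edges G" by simp
      qed
      ultimately show "h \<in> homs ?Q G" unfolding homs_def vQ by blast
    qed
  qed
  from bij_betw_same_card[OF this] show ?thesis unfolding hom_def by simp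
qed

lemma prod_of_bool_int:
  "finite E \<Longrightarrow> (\<Prod>e\<in>E. (of_bool (P e) :: int)) = of_bool (\<forall>e\<in>E. P e)"
  by (induction E rule: finite_induct) auto

lemma prod_expand:
  fixes x y :: "'e \<Rightarrow> int"
  assumes E: "finite E"
  shows "(\<Prod>e\<in>E. 1 - x e - y e) =
    (\<Sum>(S, A)\<in>Sigma (Pow E) Pow. (-1) ^ card S * ((\<Prod>e\<in>A. x e) * (\<Prod>e\<in>S - A. y e)))"
proof -
  have "(\<Prod>e\<in>E. 1 - x e - y e) = (\<Prod>e\<in>E. (- (x e + y e)) + 1)"
    by (intro prod.cong) auto
  also have "\<dots> = (\<Sum>S\<in>Pow E. (\<Prod>e\<in>S. - (x e + y e)) * (\<Prod>e\<in>E - S. 1))"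
    by (rule prod_add[OF E])
  also have "\<dots> = (\<Sum>S\<in>Pow E. (-1) ^ card S * (\<Prod>e\<in>S. x e + y e))"
  proof (intro sum.cong refl)
    fix S
    have "(\<Prod>e\<in>S. - (x e + y e)) = (-1) ^ card S * (\<Prod>e\<in>S. x e + y e)"
      by (rule prod_uminus)
    then show "(\<Prod>e\<in>S. - (x e + y e)) * (\<Prod>e\<in>E - S. 1) = (-1) ^ card S * (\<Prod>e\<in>S. x e + y e)"
      by simp
  qed
  also have "\<dots> = (\<Sum>S\<in>Pow E. (-1) ^ card S * (\<Sum>A\<in>Pow S. (\<Prod>e\<in>A. x e) * (\<Prod>e\<in>S - A. y e)))"
  proof (intro sum.cong refl)
    fix S assume "S \<in> Pow E"
    then have "finite S" using E finite_subset by blast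
    then show "(-1) ^ card S * (\<Prod>e\<in>S. x e + y e) =
        (-1) ^ card S * (\<Sum>A\<in>Pow S. (\<Prod>e\<in>A. x e) * (\<Prod>e\<in>S - A. y e))"
      by (simp add: prod_add)
  qed
  also have "\<dots> = (\<Sum>S\<in>Pow E. \<Sum>A\<in>Pow S. (-1) ^ card S * ((\<Prod>e\<in>A. x e) * (\<Prod>e\<in>S - A. y e)))"
    by (simp add: sum_distrib_left)
  also have "\<dots> = (\<Sum>(S, A)\<in>Sigma (Pow E) Pow. (-1) ^ card S * ((\<Prod>e\<in>A. x e) * (\<Prod>e\<in>S - A. y e)))"
  proof (rule sum.Sigma)
    show "finite (Pow E)" using E by simp
    show "\<forall>S\<in>Pow E. finite (Pow S)" using E finite_subset by blast
  qed
  finally show ?thesis .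
qed

lemma verts_compl: "verts (complement G) = verts G"
  by (simp add: complement_def verts_def)

lemma edges_compl: "edges (complement G) = {e. e \<subseteq> verts G \<and> card e = 2} - edges G"
  by (simp add: complement_def edges_def verts_def)

lemma compl_indicator:
  assumes K: "simple_graph K" and G: "simple_graph G" and f: "f \<in> verts K \<rightarrow>\<^sub>E verts G"
    and e: "e \<in> edges K"
  shows "(of_bool (f ` e \<in> edges (complement G)) :: int) =
         1 - of_bool (card (f ` e) = 1) - of_bool (f ` e \<in> edges G)"
proof -
  obtain u v where uv: "u \<noteq> v" "e = {u, v}" "u \<in> verts K" "v \<in> verts K"
    using simple_edgeD[OF K e] by blast
  have fe: "f ` e = {f u, f v}" using uv by simp
  have sub: "f ` e \<subseteq> verts G" using f uv by auto
  show ?thesis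
  proof (cases "f u = f v")
    case True
    then have c1: "card (f ` e) = 1" using fe by simp
    then have "f ` e \<notin> edges G" using simple_edge_card[OF G] by fastforce
    moreover have "f ` e \<notin> edges (complement G)" using c1 by (simp add: edges_compl)
    ultimately show ?thesis using c1 by simp
  next
    case False
    then have c2: "card (f ` e) = 2" using fe by simp
    have "f ` e \<in> edges (complement G) \<longleftrightarrow> f ` e \<notin> edges G" using c2 sub by (simp add: edges_compl)
    then show ?thesis using c2 by simp
  qed
qed

lemma complement_simple: "simple_graph G \<Longrightarrow> simple_graph (complement G)"
  unfolding simple_graph_def by (simp add: verts_compl edges_compl)

lemma complement_complement: "simple_graph G \<Longrightarrow> complement (complement G) = G"
proof -
  assume G: "simple_graph G"
  have "edges (complement (complement G)) = edges G"
  proof -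
    have "\<forall>e\<in>edges G. e \<subseteq> verts G \<and> card e = 2" using G unfolding simple_graph_def by blast
    then show ?thesis by (auto simp: edges_compl verts_compl)
  qed
  moreover have "verts (complement (complement G)) = verts G" by (simp add: verts_compl)
  ultimately show ?thesis by (metis graph_eqI)
qed

lemma expansion:
  assumes K: "simple_graph K" and G: "simple_graph G"
  shows "int (hom K (complement G)) =
    (\<Sum>(S, A)\<in>Sigma (Pow (edges K)) Pow. (-1) ^ card S * int (card (Nset (verts K) G A (S - A))))"
proof -
  let ?V = "verts K" and ?E = "edges K"
  let ?Fs = "?V \<rightarrow>\<^sub>E verts G"
  let ?x = "\<lambda>f e. (of_bool (card (f ` e) = 1) :: int)"
  let ?y = "\<lambda>f e. (of_bool (f ` e \<in> edges G) :: int)"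
  have finFs: "finite ?Fs" using simple_finite[OF K] simple_finite[OF G] by (simp add: finite_PiE)
  have finE: "finite ?E" using simple_finite_edges[OF K] .
  have "homs K (complement G) = {f \<in> ?Fs. \<forall>e\<in>?E. f ` e \<in> edges (complement G)}"
    using homs_alt[OF K, of "complement G"] by (simp add: verts_compl)
  then have "int (hom K (complement G)) = (\<Sum>f\<in>?Fs. of_bool (\<forall>e\<in>?E. f ` e \<in> edges (complement G)))"
    unfolding hom_def using finFs by (simp add: Int_def)
  also have "\<dots> = (\<Sum>f\<in>?Fs. \<Prod>e\<in>?E. 1 - ?x f e - ?y f e)"
  proof (intro sum.cong refl)
    fix f assume f: "f \<in> ?Fs"
    have "(of_bool (\<forall>e\<in>?E. f ` e \<in> edges (complement G)) :: int) =
          (\<Prod>e\<in>?E. of_bool (f ` e \<in> edges (complement G)))"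
      using prod_of_bool_int[OF finE] by simp
    also have "\<dots> = (\<Prod>e\<in>?E. 1 - ?x f e - ?y f e)"
      by (intro prod.cong refl compl_indicator[OF K G f])
    finally show "(of_bool (\<forall>e\<in>?E. f ` e \<in> edges (complement G)) :: int) = (\<Prod>e\<in>?E. 1 - ?x f e - ?y f e)" .
  qed
  also have "\<dots> = (\<Sum>f\<in>?Fs. \<Sum>(S, A)\<in>Sigma (Pow ?E) Pow.
                    (-1) ^ card S * ((\<Prod>e\<in>A. ?x f e) * (\<Prod>e\<in>S - A. ?y f e)))"
    by (intro sum.cong refl prod_expand[OF finE])
  also have "\<dots> = (\<Sum>p\<in>Sigma (Pow ?E) Pow. \<Sum>f\<in>?Fs. (case p of (S, A) \<Rightarrow>
                    (-1) ^ card S * ((\<Prod>e\<in>A. ?x f e) * (\<Prod>e\<in>S - A. ?y f e))))"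
    by (rule sum.swap)
  also have "\<dots> = (\<Sum>(S, A)\<in>Sigma (Pow ?E) Pow. (-1) ^ card S * int (card (Nset ?V G A (S - A))))"
  proof (intro sum.cong refl)
    fix p assume p: "p \<in> Sigma (Pow ?E) Pow"
    obtain S A where SA: "p = (S, A)" by (cases p)
    have SE: "S \<subseteq> ?E" "A \<subseteq> S" using p SA by auto
    have f1: "finite S" using finite_subset[OF SE(1) finE] .
    have finS: "finite S" "finite A" "finite (S - A)" using f1 finite_subset[OF SE(2) f1] by auto
    have "(\<Sum>f\<in>?Fs. (-1) ^ card S * ((\<Prod>e\<in>A. ?x f e) * (\<Prod>e\<in>S - A. ?y f e))) =
          (-1) ^ card S * (\<Sum>f\<in>?Fs. of_bool ((\<forall>e\<in>A. card (f ` e) = 1) \<and> (\<forall>e\<in>S - A. f ` e \<in> edges G)))"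
      by (simp add: sum_distrib_left prod_of_bool_int[OF finS(2)] prod_of_bool_int[OF finS(3)] of_bool_conj)
    also have "\<dots> = (-1) ^ card S * int (card (Nset ?V G A (S - A)))"
      using finFs by (simp add: Nset_def Int_def)
    finally show "(\<Sum>f\<in>?Fs. case p of (S, A) \<Rightarrow> (-1) ^ card S * ((\<Prod>e\<in>A. ?x f e) * (\<Prod>e\<in>S - A. ?y f e))) =
       (case p of (S, A) \<Rightarrow> (-1) ^ card S * int (card (Nset ?V G A (S - A))))" using SA by simp
  qed
  finally show ?thesis .
qed

lemma quot_simple:
  assumes "finite P" shows "simple_graph (quotient_graph F P)"
proof -
  have "finite (verts (quotient_graph F P))" using assms by (simp add: verts_quot)
  moreover have "\<forall>e\<in>edges (quotient_graph F P). e \<subseteq> verts (quotient_graph F P) \<and> card e = 2"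
  proof
    fix e assume "e \<in> edges (quotient_graph F P)"
    then obtain A B where "e = {A, B}" "A \<in> P" "B \<in> P" "A \<noteq> B" unfolding edges_quot by blast
    then show "e \<subseteq> verts (quotient_graph F P) \<and> card e = 2" by (simp add: verts_quot)
  qed
  ultimately show ?thesis unfolding simple_graph_def by blast
qed

lemma quot_simple_comps: "finite V \<Longrightarrow> simple_graph (quotient_graph F (comps V B))"
  by (rule quot_simple[OF finite_comps])

lemma quot_diff:
  assumes AS: "A \<subseteq> S" and hA: "\<forall>e\<in>A. e \<subseteq> V"
  shows "quotient_graph (V, S - A) (comps V A) = quotient_graph (V, S) (comps V A)"
proof (rule graph_eqI)
  show "verts (quotient_graph (V, S - A) (comps V A)) = verts (quotient_graph (V, S) (comps V A))"
    by (simp add: verts_quot)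
  have "\<And>X Y a b. X \<in> comps V A \<Longrightarrow> Y \<in> comps V A \<Longrightarrow> X \<noteq> Y \<Longrightarrow> a \<in> X \<Longrightarrow> b \<in> Y \<Longrightarrow> {a, b} \<notin> A"
  proof
    fix X Y a b assume XY: "X \<in> comps V A" "Y \<in> comps V A" "X \<noteq> Y" "a \<in> X" "b \<in> Y" "{a, b} \<in> A"
    have aV: "a \<in> V" "b \<in> V" using XY hA by auto
    have "(a, b) \<in> eqr V A" using edge_in_eqr[OF XY(6) aV] .
    then have "cls V A a = cls V A b" using cls_eq_iff[OF aV] by simp
    moreover have "cls V A a = X" "cls V A b = Y" using comps_cls[OF XY(1) XY(4)] comps_cls[OF XY(2) XY(5)] by auto
    ultimately show False using XY(3) by simp
  qed
  note key = this
  show "edges (quotient_graph (V, S - A) (comps V A)) = edges (quotient_graph (V, S) (comps V A))"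
    unfolding edges_quot edges_pair
  proof (intro Collect_cong iffI)
    fix e assume "\<exists>X Y. e = {X, Y} \<and> X \<in> comps V A \<and> Y \<in> comps V A \<and> X \<noteq> Y \<and> (\<exists>a\<in>X. \<exists>b\<in>Y. {a, b} \<in> S - A)"
    then obtain X Y a b where h: "e = {X, Y}" "X \<in> comps V A" "Y \<in> comps V A" "X \<noteq> Y" "a \<in> X" "b \<in> Y" "{a, b} \<in> S - A"
      by blast
    then show "\<exists>X Y. e = {X, Y} \<and> X \<in> comps V A \<and> Y \<in> comps V A \<and> X \<noteq> Y \<and> (\<exists>a\<in>X. \<exists>b\<in>Y. {a, b} \<in> S)"
      by blast
  next
    fix e assume "\<exists>X Y. e = {X, Y} \<and> X \<in> comps V A \<and> Y \<in> comps V A \<and> X \<noteq> Y \<and> (\<exists>a\<in>X. \<exists>b\<in>Y. {a, b} \<in> S)"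
    then obtain X Y a b where h: "e = {X, Y}" "X \<in> comps V A" "Y \<in> comps V A" "X \<noteq> Y" "a \<in> X" "b \<in> Y" "{a, b} \<in> S"
      by blast
    have "{a, b} \<notin> A" using key[OF h(2) h(3) h(4) h(5) h(6)] .
    then show "\<exists>X Y. e = {X, Y} \<and> X \<in> comps V A \<and> Y \<in> comps V A \<and> X \<noteq> Y \<and> (\<exists>a\<in>X. \<exists>b\<in>Y. {a, b} \<in> S - A)"
      using h by blast
  qed
qed

lemma comps_contraction:
  assumes AS: "A \<subseteq> S" and hA: "\<forall>e\<in>A. e \<subseteq> V"
  shows "contraction_partition (V, S) (comps V A)"
  unfolding contraction_partition_def
proof (intro conjI ballI)
  show "partition_on (verts (V, S)) (comps V A)" using partition_comps by (simp add: verts_pair)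
  fix X assume X: "X \<in> comps V A"
  show "induced_connected (V, S) X"
    unfolding induced_connected_def
  proof (intro ballI)
    fix u w assume uw: "u \<in> X" "w \<in> X"
    have uV: "u \<in> V" using comps_sub[OF X] uw by blast
    have cX: "cls V A u = X" using comps_cls[OF X uw(1)] .
    let ?R = "{(x, y). x \<in> X \<and> y \<in> X \<and> {x, y} \<in> edges (V, S)}"
    have "(u, w) \<in> eqr V A" using cX uw(2) unfolding cls_def by auto
    then have path: "(u, w) \<in> (rel_of A)\<^sup>*" unfolding eqr_def by auto
    have "\<And>z. (u, z) \<in> (rel_of A)\<^sup>* \<Longrightarrow> (u, z) \<in> ?R\<^sup>* \<and> z \<in> X"
    proof -
      fix z assume "(u, z) \<in> (rel_of A)\<^sup>*"
      then show "(u, z) \<in> ?R\<^sup>* \<and> z \<in> X"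
      proof (induction rule: rtrancl_induct)
        case base then show ?case using uw(1) by simp
      next
        case (step y z)
        have yz: "{y, z} \<in> A" using step.hyps(2) unfolding rel_of_def by simp
        have zV: "z \<in> V" "y \<in> V" using hA yz by auto
        have "(u, z) \<in> (rel_of A)\<^sup>*" using step.hyps by (rule rtrancl.rtrancl_into_rtrancl)
        then have "(u, z) \<in> eqr V A" using uV zV unfolding eqr_def by auto
        then have zX: "z \<in> X" using cX unfolding cls_def by auto
        have "{y, z} \<in> edges (V, S)" using yz AS by (auto simp: edges_pair)
        then have "(y, z) \<in> ?R" using step.IH zX by simp
        then have "(u, z) \<in> ?R\<^sup>*" using step.IH by (meson rtrancl.rtrancl_into_rtrancl)
        then show ?case using zX by simp
      qed
    qed
    then show "(u, w) \<in> ?R\<^sup>*" using path by blast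
  qed
qed

lemma eqr_empty:
  fixes x y :: 'a
  shows "(x, y) \<in> eqr V {} \<Longrightarrow> x = y"
proof -
  assume "(x, y) \<in> eqr V {}"
  then have xy: "(x, y) \<in> (rel_of ({} :: 'a set set))\<^sup>*" unfolding eqr_def by simp
  have "rel_of ({} :: 'a set set) = {}" unfolding rel_of_def by simp
  then have "(rel_of ({} :: 'a set set))\<^sup>* = Id" by simp
  then show "x = y" using xy by simp
qed

lemma valid_empty: "valid V {} Eb"
  unfolding valid_def
proof (intro ballI impI)
  fix e x y assume "(x, y) \<in> eqr V {}"
  then show "x = y" by (rule eqr_empty)
qed

lemma card_comps_lt:
  assumes V: "finite V" and hA: "\<forall>e\<in>A. e \<subseteq> V \<and> card e = 2" and ne: "A \<noteq> {}"
  shows "card (comps V A) < card V"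
proof -
  have img: "comps V A = cls V A ` V"
  proof
    show "comps V A \<subseteq> cls V A ` V"
    proof
      fix X assume X: "X \<in> comps V A"
      obtain a where a: "a \<in> X" using comps_ne[OF X] by blast
      have "a \<in> V" using comps_sub[OF X] a by blast
      moreover have "X = cls V A a" using comps_cls[OF X a] by simp
      ultimately show "X \<in> cls V A ` V" by blast
    qed
    show "cls V A ` V \<subseteq> comps V A"
    proof
      fix X assume "X \<in> cls V A ` V"
      then obtain x where "x \<in> V" "X = cls V A x" by blast
      then show "X \<in> comps V A" using cls_in[of x V A] by simp
    qed
  qed
  obtain e where e: "e \<in> A" using ne by blast
  then have "card e = 2" "e \<subseteq> V" using hA by auto
  then obtain u v where uv0: "u \<noteq> v" "e = {u, v}" using two_set[of e] by blast
  then have uv: "u \<noteq> v" "e = {u, v}" "u \<in> V" "v \<in> V" using \<open>e \<subseteq> V\<close> by auto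
  have "(u, v) \<in> eqr V A" using edge_in_eqr[of u v A V] e uv by simp
  then have "cls V A u = cls V A v" using cls_eq_iff[OF uv(3) uv(4)] by simp
  then have "\<not> inj_on (cls V A) V" using uv(1,3,4) unfolding inj_on_def by blast
  then have "card (cls V A ` V) \<noteq> card V" using inj_on_iff_eq_card[OF V] by blast
  moreover have "card (cls V A ` V) \<le> card V" using card_image_le[OF V] .
  ultimately show ?thesis using img by simp
qed

lemma card_comps_empty:
  assumes V: "finite V" shows "card (comps V {}) = card V"
proof -
  have img: "comps V {} = cls V {} ` V"
  proof
    show "comps V {} \<subseteq> cls V {} ` V"
    proof
      fix X assume X: "X \<in> comps V {}"
      obtain a where a: "a \<in> X" using comps_ne[OF X] by blast
      have "a \<in> V" using comps_sub[OF X] a by blast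
      moreover have "X = cls V {} a" using comps_cls[OF X a] by simp
      ultimately show "X \<in> cls V {} ` V" by blast
    qed
    show "cls V {} ` V \<subseteq> comps V {}"
    proof
      fix X assume "X \<in> cls V {} ` V"
      then obtain x where "x \<in> V" "X = cls V {} x" by blast
      then show "X \<in> comps V {}" using cls_in[of x V "{}"] by simp
    qed
  qed
  have "inj_on (cls V {}) V"
  proof (rule inj_onI)
    fix x y assume xy: "x \<in> V" "y \<in> V" "cls V {} x = cls V {} y"
    then have "(x, y) \<in> eqr V {}" using cls_eq_iff[OF xy(1) xy(2)] by simp
    then show "x = y" by (rule eqr_empty)
  qed
  then show ?thesis using img by (simp add: card_image)
qed

lemma iso_singletons:
  assumes hS: "\<forall>e\<in>S. card e = 2"
  shows "graph_iso (V, S) (quotient_graph (V, S) (comps V {}))"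
proof -
  let ?c = "cls V {}"
  have inj: "inj_on ?c V"
  proof (rule inj_onI)
    fix x y assume xy: "x \<in> V" "y \<in> V" "?c x = ?c y"
    then have "(x, y) \<in> eqr V {}" using cls_eq_iff[OF xy(1) xy(2)] by simp
    then show "x = y" by (rule eqr_empty)
  qed
  have img: "?c ` V = comps V {}"
  proof
    show "comps V {} \<subseteq> ?c ` V"
    proof
      fix X assume X: "X \<in> comps V {}"
      obtain a where a: "a \<in> X" using comps_ne[OF X] by blast
      have "a \<in> V" using comps_sub[OF X] a by blast
      moreover have "X = ?c a" using comps_cls[OF X a] by simp
      ultimately show "X \<in> ?c ` V" by blast
    qed
    show "?c ` V \<subseteq> comps V {}"
    proof
      fix X assume "X \<in> ?c ` V"
      then obtain x where "x \<in> V" "X = ?c x" by blast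
      then show "X \<in> comps V {}" using cls_in[of x V "{}"] by simp
    qed
  qed
  have bij: "bij_betw ?c (verts (V, S)) (verts (quotient_graph (V, S) (comps V {})))"
    using inj img by (simp add: bij_betw_def verts_pair verts_quot)
  have "\<forall>u\<in>V. \<forall>v\<in>V. {u, v} \<in> S \<longleftrightarrow> {?c u, ?c v} \<in> edges (quotient_graph (V, S) (comps V {}))"
  proof (intro ballI iffI)
    fix u v assume uv: "u \<in> V" "v \<in> V" "{u, v} \<in> S"
    have "card {u, v} = 2" using hS uv(3) by blast
    then have "u \<noteq> v" by (cases "u = v") auto
    then have "?c u \<noteq> ?c v" using inj uv unfolding inj_on_def by blast
    moreover have "?c u \<in> comps V {}" "?c v \<in> comps V {}" using cls_in[OF uv(1)] cls_in[OF uv(2)] by auto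
    moreover have "u \<in> ?c u" "v \<in> ?c v" using cls_self[OF uv(1)] cls_self[OF uv(2)] by auto
    ultimately show "{?c u, ?c v} \<in> edges (quotient_graph (V, S) (comps V {}))"
      unfolding edges_quot edges_pair using uv(3) by blast
  next
    fix u v assume uv: "u \<in> V" "v \<in> V" "{?c u, ?c v} \<in> edges (quotient_graph (V, S) (comps V {}))"
    then obtain X Y a b where XY: "{?c u, ?c v} = {X, Y}" "X \<in> comps V {}" "Y \<in> comps V {}"
      "a \<in> X" "b \<in> Y" "{a, b} \<in> S"
      unfolding edges_quot edges_pair by blast
    have ab: "a \<in> V" "b \<in> V" using XY(4,5) comps_sub[OF XY(2)] comps_sub[OF XY(3)] by auto
    have "X = ?c a" "Y = ?c b" using comps_cls[OF XY(2) XY(4)] comps_cls[OF XY(3) XY(5)] by auto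
    then have "{?c u, ?c v} = {?c a, ?c b}" using XY(1) by simp
    then have "(?c u = ?c a \<and> ?c v = ?c b) \<or> (?c u = ?c b \<and> ?c v = ?c a)" by (simp add: doubleton_eq_iff)
    then have "(u = a \<and> v = b) \<or> (u = b \<and> v = a)" using inj uv ab unfolding inj_on_def by blast
    then show "{u, v} \<in> S" using XY(6) by (auto simp: insert_commute)
  qed
  then have "\<forall>u\<in>verts (V, S). \<forall>v\<in>verts (V, S). {u, v} \<in> edges (V, S) \<longleftrightarrow> {?c u, ?c v} \<in> edges (quotient_graph (V, S) (comps V {}))"
    by (simp add: verts_pair edges_pair)
  then show ?thesis unfolding graph_iso_def using bij by blast
qed

definition Jset :: "'a set set \<Rightarrow> ('a set set \<times> 'a set set) set" where
  "Jset E = Sigma (Pow E) Pow"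

definition QP :: "'a graph \<Rightarrow> 'a set set \<times> 'a set set \<Rightarrow> 'a set graph" where
  "QP K p = quotient_graph (verts K, fst p) (comps (verts K) (snd p))"

definition coef :: "'a graph \<Rightarrow> 'a set set \<times> 'a set set \<Rightarrow> int" where
  "coef K p = (if valid (verts K) (snd p) (fst p - snd p) then (-1) ^ card (fst p) else 0)"

lemma Jset_finite: "finite E \<Longrightarrow> finite (Jset E)"
  unfolding Jset_def by (intro finite_SigmaI) (auto intro: finite_subset)

lemma QP_simple: "simple_graph K \<Longrightarrow> simple_graph (QP K p)"
  unfolding QP_def by (rule quot_simple_comps[OF simple_finite])

lemma expansion2:
  assumes K: "simple_graph K" and G: "simple_graph G"
  shows "int (hom K (complement G)) = (\<Sum>p\<in>Jset (edges K). coef K p * int (hom (natcopy (QP K p)) G))"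
proof -
  let ?V = "verts K"
  have "int (hom K (complement G)) =
    (\<Sum>(S, A)\<in>Sigma (Pow (edges K)) Pow. (-1) ^ card S * int (card (Nset ?V G A (S - A))))"
    by (rule expansion[OF K G])
  also have "\<dots> = (\<Sum>p\<in>Jset (edges K). coef K p * int (hom (natcopy (QP K p)) G))"
    unfolding Jset_def
  proof (intro sum.cong refl)
    fix p assume p: "p \<in> Sigma (Pow (edges K)) Pow"
    obtain S A where SA: "p = (S, A)" by (cases p)
    have SE: "S \<subseteq> edges K" "A \<subseteq> S" using p SA by auto
    have hS: "\<forall>e\<in>S. e \<subseteq> ?V \<and> card e = 2"
      using SE simple_edge_sub[OF K] simple_edge_card[OF K] by blast
    have hA: "\<forall>e\<in>A. e \<subseteq> ?V \<and> card e = 2" using hS SE(2) by blast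
    have hB: "\<forall>e\<in>S - A. e \<subseteq> ?V \<and> card e = 2" using hS by blast
    have finV: "finite ?V" using simple_finite[OF K] .
    have Qs: "simple_graph (QP K p)" using QP_simple[OF K] .
    have hq: "hom (natcopy (QP K p)) G = hom (QP K p) G"
      by (rule sym[OF graph_iso_hom[OF natcopy_iso[OF Qs]]])
    show "(case p of (S, A) \<Rightarrow> (-1) ^ card S * int (card (Nset ?V G A (S - A)))) =
          coef K p * int (hom (natcopy (QP K p)) G)"
    proof (cases "valid ?V A (S - A)")
      case True
      have "card (Nset ?V G A (S - A)) = hom (quotient_graph (?V, S - A) (comps ?V A)) G"
        using Nset_valid[OF finV G hA hB True] .
      also have "quotient_graph (?V, S - A) (comps ?V A) = QP K p"
        unfolding QP_def SA using quot_diff[OF SE(2)] hA by simp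
      finally show ?thesis using True hq SA by (simp add: coef_def)
    next
      case False
      have "\<forall>e\<in>S - A. card e = 2" using hB by blast
      then have "Nset ?V G A (S - A) = {}" using Nset_invalid[OF G _ False] by blast
      then show ?thesis using False SA by (simp add: coef_def)
    qed
  qed
  finally show ?thesis .
qed

definition inv_par :: "nat graph set \<Rightarrow> (nat graph \<Rightarrow> int) \<Rightarrow> bool" where
  "inv_par \<F> \<phi> \<longleftrightarrow> (\<forall>G H. simple_graph G \<longrightarrow> simple_graph H \<longrightarrow> hom_equiv \<F> G H \<longrightarrow> \<phi> G = \<phi> H)"

definition good :: "nat graph set \<Rightarrow> 'a graph \<Rightarrow> bool" where
  "good \<F> Y \<longleftrightarrow> simple_graph Y \<and> inv_par \<F> (\<lambda>G. int (hom Y G))"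

lemma good_iso:
  assumes "good \<F> A" "graph_iso A B" "simple_graph B"
  shows "good \<F> B"
  using assms(1) unfolding good_def by (simp add: graph_iso_hom[OF assms(2)] assms(3))

lemma inv_parI:
  "(\<And>G H. simple_graph G \<Longrightarrow> simple_graph H \<Longrightarrow> hom_equiv \<F> G H \<Longrightarrow> \<phi> G = \<phi> H) \<Longrightarrow> inv_par \<F> \<phi>"
  unfolding inv_par_def by blast

lemma inv_parD:
  "inv_par \<F> \<phi> \<Longrightarrow> simple_graph G \<Longrightarrow> simple_graph H \<Longrightarrow> hom_equiv \<F> G H \<Longrightarrow> \<phi> G = \<phi> H"
  unfolding inv_par_def by blast

lemma indep:
  fixes Fs :: "'i \<Rightarrow> nat graph" and \<alpha> :: "'i \<Rightarrow> int"
  assumes simpF: "\<forall>F\<in>\<F>. simple_graph F"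
  shows "finite I \<Longrightarrow> (\<forall>i\<in>I. simple_graph (Fs i)) \<Longrightarrow>
    inv_par \<F> (\<lambda>G. \<Sum>i\<in>I. \<alpha> i * int (hom (Fs i) G)) \<Longrightarrow> j \<in> I \<Longrightarrow>
    (\<Sum>i\<in>{i\<in>I. graph_iso (Fs i) (Fs j)}. \<alpha> i) \<noteq> 0 \<Longrightarrow>
    inv_par \<F> (\<lambda>G. int (hom (Fs j) G))"
proof (induction "card {i\<in>I. \<not> graph_iso (Fs i) (Fs j)}" arbitrary: I \<alpha> rule: less_induct)
  case less
  note finI = less.prems(1) and simpI = less.prems(2) and invI = less.prems(3)
    and jI = less.prems(4) and sumI = less.prems(5)
  show ?case
  proof (cases "{i\<in>I. \<not> graph_iso (Fs i) (Fs j)} = {}")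
    case True
    then have allI: "\<forall>i\<in>I. graph_iso (Fs i) (Fs j)" by blast
    then have cls: "{i\<in>I. graph_iso (Fs i) (Fs j)} = I" by blast
    let ?c = "\<Sum>i\<in>I. \<alpha> i"
    have eq: "(\<Sum>i\<in>I. \<alpha> i * int (hom (Fs i) G)) = ?c * int (hom (Fs j) G)" for G
    proof -
      have "(\<Sum>i\<in>I. \<alpha> i * int (hom (Fs i) G)) = (\<Sum>i\<in>I. \<alpha> i * int (hom (Fs j) G))"
      proof (intro sum.cong refl)
        fix i assume "i \<in> I"
        then have "hom (Fs i) G = hom (Fs j) G" using allI graph_iso_hom by blast
        then show "\<alpha> i * int (hom (Fs i) G) = \<alpha> i * int (hom (Fs j) G)" by simp
      qed
      then show ?thesis by (simp add: sum_distrib_right)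
    qed
    have c0: "?c \<noteq> 0" using sumI cls by simp
    show ?thesis
    proof (rule inv_parI)
      fix G H :: "nat graph" assume GH: "simple_graph G" "simple_graph H" "hom_equiv \<F> G H"
      have "?c * int (hom (Fs j) G) = ?c * int (hom (Fs j) H)"
        using inv_parD[OF invI GH] eq[of G] eq[of H] by simp
      then show "int (hom (Fs j) G) = int (hom (Fs j) H)" using c0 by simp
    qed
  next
    case False
    then obtain k where k: "k \<in> I" "\<not> graph_iso (Fs k) (Fs j)" by blast
    have kj: "\<not> graph_iso (Fs j) (Fs k)" using k(2) graph_iso_sym by blast
    have "\<not> (\<forall>T::nat graph. simple_graph T \<longrightarrow> hom (Fs j) T = hom (Fs k) T)"
      using lovasz[of "Fs j" "Fs k"] simpI jI k(1) kj by blast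
    then obtain T :: "nat graph" where T: "simple_graph T" "hom (Fs j) T \<noteq> hom (Fs k) T" by blast
    let ?I' = "{i\<in>I. \<not> graph_iso (Fs i) (Fs k)}"
    let ?\<alpha>' = "\<lambda>i. \<alpha> i * (int (hom (Fs i) T) - int (hom (Fs k) T))"
    have finI': "finite ?I'" using finI by simp
    have simpI': "\<forall>i\<in>?I'. simple_graph (Fs i)" using simpI by blast
    have jI': "j \<in> ?I'" using jI kj by blast
    have sums: "(\<Sum>i\<in>?I'. ?\<alpha>' i * int (hom (Fs i) G)) =
      (\<Sum>i\<in>I. \<alpha> i * int (hom (Fs i) (tensor G T))) - int (hom (Fs k) T) * (\<Sum>i\<in>I. \<alpha> i * int (hom (Fs i) G))"
      for G
    proof -
      have "(\<Sum>i\<in>I. \<alpha> i * int (hom (Fs i) (tensor G T))) - int (hom (Fs k) T) * (\<Sum>i\<in>I. \<alpha> i * int (hom (Fs i) G))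
          = (\<Sum>i\<in>I. ?\<alpha>' i * int (hom (Fs i) G))"
        using simpI by (simp add: hom_tensor sum_distrib_left sum_subtractf[symmetric] algebra_simps)
      also have "\<dots> = (\<Sum>i\<in>?I'. ?\<alpha>' i * int (hom (Fs i) G))"
      proof (rule sum.mono_neutral_right[OF finI])
        show "?I' \<subseteq> I" by blast
        show "\<forall>i\<in>I - ?I'. ?\<alpha>' i * int (hom (Fs i) G) = 0"
        proof
          fix i assume "i \<in> I - ?I'"
          then have "graph_iso (Fs i) (Fs k)" by blast
          then have "hom (Fs i) T = hom (Fs k) T" by (rule graph_iso_hom)
          then show "?\<alpha>' i * int (hom (Fs i) G) = 0" by simp
        qed
      qed
      finally show ?thesis by simp
    qed
    have inv': "inv_par \<F> (\<lambda>G. \<Sum>i\<in>?I'. ?\<alpha>' i * int (hom (Fs i) G))"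
    proof (rule inv_parI)
      fix G H :: "nat graph" assume GH: "simple_graph G" "simple_graph H" "hom_equiv \<F> G H"
      have GHT: "hom_equiv \<F> (tensor G T) (tensor H T)" using hom_equiv_tensor[OF GH(3) simpF] .
      have "(\<Sum>i\<in>I. \<alpha> i * int (hom (Fs i) (tensor G T))) = (\<Sum>i\<in>I. \<alpha> i * int (hom (Fs i) (tensor H T)))"
        using inv_parD[OF invI tensor_simple[OF GH(1) T(1)] tensor_simple[OF GH(2) T(1)] GHT] .
      moreover have "(\<Sum>i\<in>I. \<alpha> i * int (hom (Fs i) G)) = (\<Sum>i\<in>I. \<alpha> i * int (hom (Fs i) H))"
        using inv_parD[OF invI GH] .
      ultimately show "(\<Sum>i\<in>?I'. ?\<alpha>' i * int (hom (Fs i) G)) = (\<Sum>i\<in>?I'. ?\<alpha>' i * int (hom (Fs i) H))"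
        using sums[of G] sums[of H] by simp
    qed
    have clsI': "{i\<in>?I'. graph_iso (Fs i) (Fs j)} = {i\<in>I. graph_iso (Fs i) (Fs j)}"
    proof
      show "{i\<in>I. graph_iso (Fs i) (Fs j)} \<subseteq> {i\<in>?I'. graph_iso (Fs i) (Fs j)}"
      proof
        fix i assume i: "i \<in> {i\<in>I. graph_iso (Fs i) (Fs j)}"
        have "\<not> graph_iso (Fs i) (Fs k)"
        proof
          assume "graph_iso (Fs i) (Fs k)"
          then have "graph_iso (Fs j) (Fs k)" using i graph_iso_sym graph_iso_trans by blast
          then show False using kj by simp
        qed
        then show "i \<in> {i\<in>?I'. graph_iso (Fs i) (Fs j)}" using i by blast
      qed
    qed blast
    have "(\<Sum>i\<in>{i\<in>?I'. graph_iso (Fs i) (Fs j)}. ?\<alpha>' i) =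
          (\<Sum>i\<in>{i\<in>I. graph_iso (Fs i) (Fs j)}. \<alpha> i * (int (hom (Fs j) T) - int (hom (Fs k) T)))"
      unfolding clsI'
    proof (intro sum.cong refl)
      fix i assume "i \<in> {i\<in>I. graph_iso (Fs i) (Fs j)}"
      then have "hom (Fs i) T = hom (Fs j) T" using graph_iso_hom by blast
      then show "?\<alpha>' i = \<alpha> i * (int (hom (Fs j) T) - int (hom (Fs k) T))" by simp
    qed
    also have "\<dots> = (\<Sum>i\<in>{i\<in>I. graph_iso (Fs i) (Fs j)}. \<alpha> i) * (int (hom (Fs j) T) - int (hom (Fs k) T))"
      by (simp add: sum_distrib_right)
    finally have sum': "(\<Sum>i\<in>{i\<in>?I'. graph_iso (Fs i) (Fs j)}. ?\<alpha>' i) \<noteq> 0"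
      using sumI T(2) by simp
    have lt: "card {i\<in>?I'. \<not> graph_iso (Fs i) (Fs j)} < card {i\<in>I. \<not> graph_iso (Fs i) (Fs j)}"
    proof (rule psubset_card_mono)
      show "finite {i\<in>I. \<not> graph_iso (Fs i) (Fs j)}" using finI by simp
      have "k \<notin> ?I'" using graph_iso_refl by blast
      then show "{i\<in>?I'. \<not> graph_iso (Fs i) (Fs j)} \<subset> {i\<in>I. \<not> graph_iso (Fs i) (Fs j)}"
        using k by blast
    qed
    show ?thesis using less.hyps[OF lt finI' simpI' inv' jI' sum'] .
  qed
qed

lemma spanning_simple:
  assumes K: "simple_graph K" and S: "S \<subseteq> edges K"
  shows "simple_graph (verts K, S)"
  unfolding simple_graph_def verts_pair edges_pair
  using simple_finite[OF K] S simple_edge_sub[OF K] simple_edge_card[OF K] by blast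

lemma inv_hom_compl:
  assumes comp: "\<forall>G H :: nat graph. simple_graph G \<longrightarrow> simple_graph H \<longrightarrow> hom_equiv \<F> G H \<longrightarrow>
      hom_equiv \<F> (complement G) (complement H)"
    and K: "good \<F> K"
  shows "inv_par \<F> (\<lambda>G. int (hom K (complement G)))"
proof (rule inv_parI)
  fix G H :: "nat graph" assume GH: "simple_graph G" "simple_graph H" "hom_equiv \<F> G H"
  have "hom_equiv \<F> (complement G) (complement H)" using comp GH by blast
  then show "int (hom K (complement G)) = int (hom K (complement H))"
    using inv_parD[OF conjunct2[OF K[unfolded good_def]] complement_simple[OF GH(1)] complement_simple[OF GH(2)]]
    by blast
qed

lemma inv_expansion:
  assumes comp: "\<forall>G H :: nat graph. simple_graph G \<longrightarrow> simple_graph H \<longrightarrow> hom_equiv \<F> G H \<longrightarrow>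
      hom_equiv \<F> (complement G) (complement H)"
    and K: "good \<F> K"
  shows "inv_par \<F> (\<lambda>G. \<Sum>p\<in>Jset (edges K). coef K p * int (hom (natcopy (QP K p)) G))"
proof (rule inv_parI)
  have Ks: "simple_graph K" using K unfolding good_def by blast
  fix G H :: "nat graph" assume GH: "simple_graph G" "simple_graph H" "hom_equiv \<F> G H"
  have "int (hom K (complement G)) = int (hom K (complement H))"
    using inv_parD[OF inv_hom_compl[OF comp K] GH] .
  then show "(\<Sum>p\<in>Jset (edges K). coef K p * int (hom (natcopy (QP K p)) G)) =
             (\<Sum>p\<in>Jset (edges K). coef K p * int (hom (natcopy (QP K p)) H))"
    using expansion2[OF Ks GH(1)] expansion2[OF Ks GH(2)] by simp
qed

lemma class_sum_nonzero:
  fixes c :: int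
  assumes fin: "finite C" and j: "j \<in> C" "Q j" and c: "c \<noteq> 0"
    and h: "\<forall>p\<in>C. f p = (if Q p then c else 0)"
  shows "(\<Sum>p\<in>C. f p) \<noteq> 0"
proof -
  have "(\<Sum>p\<in>C. f p) = (\<Sum>p\<in>C. if Q p then c else 0)" using h by (intro sum.cong) auto
  also have "\<dots> = (\<Sum>p\<in>{p\<in>C. Q p}. c)" using sum.inter_filter[OF fin, of "\<lambda>_. c" Q] by simp
  also have "\<dots> = c * int (card {p\<in>C. Q p})" by simp
  finally have eq: "(\<Sum>p\<in>C. f p) = c * int (card {p\<in>C. Q p})" .
  have "card {p\<in>C. Q p} > 0" using fin j by (auto simp: card_gt_0_iff)
  then show ?thesis using eq c by simp
qed

lemma step_spanning:
  assumes simpF: "\<forall>F\<in>\<F>. simple_graph F"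
    and comp: "\<forall>G H :: nat graph. simple_graph G \<longrightarrow> simple_graph H \<longrightarrow> hom_equiv \<F> G H \<longrightarrow>
      hom_equiv \<F> (complement G) (complement H)"
    and K: "good \<F> K" and E': "E' \<subseteq> edges K"
  shows "good \<F> (verts K, E')"
proof -
  have Ks: "simple_graph K" using K unfolding good_def by blast
  let ?V = "verts K" and ?E = "edges K"
  let ?Fs = "\<lambda>p. natcopy (QP K p)"
  let ?j = "(E', {})"
  have finV: "finite ?V" using simple_finite[OF Ks] .
  have finJ: "finite (Jset ?E)" using Jset_finite[OF simple_finite_edges[OF Ks]] .
  have simpFs: "\<forall>p\<in>Jset ?E. simple_graph (?Fs p)" using natcopy_simple[OF QP_simple[OF Ks]] by blast
  have jJ: "?j \<in> Jset ?E" using E' unfolding Jset_def by auto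
  have inv: "inv_par \<F> (\<lambda>G. \<Sum>p\<in>Jset ?E. coef K p * int (hom (?Fs p) G))"
    using inv_expansion[OF comp K] .
  have hS: "\<forall>e\<in>S. card e = 2" if "S \<subseteq> ?E" for S using that simple_edge_card[OF Ks] by blast
  have Qj: "QP K ?j = quotient_graph (?V, E') (comps ?V {})" by (simp add: QP_def)
  have isoj: "graph_iso (?V, E') (QP K ?j)" unfolding Qj using iso_singletons[OF hS[OF E']] .
  have cj: "card (verts (?Fs ?j)) = card ?V"
  proof -
    have "card (verts (?Fs ?j)) = card (verts (QP K ?j))"
      using graph_iso_card_verts[OF natcopy_iso[OF QP_simple[OF Ks]]] by simp
    also have "\<dots> = card ?V" using card_comps_empty[OF finV] by (simp add: QP_def verts_quot)
    finally show ?thesis .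
  qed
  have ej: "card (edges (?Fs ?j)) = card E'"
  proof -
    have "card (edges (?Fs ?j)) = card (edges (QP K ?j))"
      using graph_iso_card_edges[OF natcopy_iso[OF QP_simple[OF Ks]] QP_simple[OF Ks] natcopy_simple[OF QP_simple[OF Ks]]] by simp
    also have "\<dots> = card (edges (?V, E'))"
      using graph_iso_card_edges[OF isoj spanning_simple[OF Ks E'] QP_simple[OF Ks]] by simp
    finally show ?thesis by (simp add: edges_pair)
  qed
  have cls_coef: "\<forall>p\<in>{p\<in>Jset ?E. graph_iso (?Fs p) (?Fs ?j)}.
      coef K p = (if valid ?V (snd p) (fst p - snd p) then (-1) ^ card E' else 0)"
  proof
    fix p assume p: "p \<in> {p\<in>Jset ?E. graph_iso (?Fs p) (?Fs ?j)}"
    obtain S A where SA: "p = (S, A)" by (cases p)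
    have SE: "S \<subseteq> ?E" "A \<subseteq> S" using p SA unfolding Jset_def by auto
    have iso: "graph_iso (?Fs p) (?Fs ?j)" using p by blast
    have cp: "card (verts (?Fs p)) = card (comps ?V A)"
    proof -
      have "card (verts (?Fs p)) = card (verts (QP K p))"
        using graph_iso_card_verts[OF natcopy_iso[OF QP_simple[OF Ks]]] by simp
      then show ?thesis using SA by (simp add: QP_def verts_quot)
    qed
    have A0: "A = {}"
    proof (rule ccontr)
      assume "A \<noteq> {}"
      have "\<forall>e\<in>A. e \<subseteq> ?V \<and> card e = 2" using SE simple_edge_sub[OF Ks] simple_edge_card[OF Ks] by blast
      then have "card (comps ?V A) < card ?V" using card_comps_lt[OF finV] \<open>A \<noteq> {}\<close> by blast
      moreover have "card (verts (?Fs p)) = card (verts (?Fs ?j))" using graph_iso_card_verts[OF iso] .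
      ultimately show False using cp cj by simp
    qed
    have "card S = card E'"
    proof -
      have isoS: "graph_iso (?V, S) (QP K p)" using iso_singletons[OF hS[OF SE(1)]] SA A0 by (simp add: QP_def)
      have "card S = card (edges (QP K p))"
        using graph_iso_card_edges[OF isoS spanning_simple[OF Ks SE(1)] QP_simple[OF Ks]] by (simp add: edges_pair)
      also have "\<dots> = card (edges (?Fs p))"
        using graph_iso_card_edges[OF natcopy_iso[OF QP_simple[OF Ks]] QP_simple[OF Ks] natcopy_simple[OF QP_simple[OF Ks]]] by simp
      also have "\<dots> = card (edges (?Fs ?j))"
        using graph_iso_card_edges[OF iso natcopy_simple[OF QP_simple[OF Ks]] natcopy_simple[OF QP_simple[OF Ks]]] .
      finally show ?thesis using ej by simp
    qed
    then show "coef K p = (if valid ?V (snd p) (fst p - snd p) then (-1) ^ card E' else 0)"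
      using SA by (simp add: coef_def)
  qed
  have sum0: "(\<Sum>p\<in>{p\<in>Jset ?E. graph_iso (?Fs p) (?Fs ?j)}. coef K p) \<noteq> 0"
  proof (rule class_sum_nonzero[where Q="\<lambda>p. valid ?V (snd p) (fst p - snd p)" and j="?j"])
    show "finite {p\<in>Jset ?E. graph_iso (?Fs p) (?Fs ?j)}" using finJ by simp
    show "?j \<in> {p\<in>Jset ?E. graph_iso (?Fs p) (?Fs ?j)}" using jJ graph_iso_refl by blast
    show "valid ?V (snd ?j) (fst ?j - snd ?j)" using valid_empty by simp
    show "((-1) ^ card E' :: int) \<noteq> 0" by simp
  qed (rule cls_coef)
  have "inv_par \<F> (\<lambda>G. int (hom (?Fs ?j) G))"
    using indep[OF simpF finJ simpFs inv jJ sum0] .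
  then have "good \<F> (?Fs ?j)" using natcopy_simple[OF QP_simple[OF Ks]] unfolding good_def by blast
  then have "good \<F> (QP K ?j)"
    using good_iso[OF _ graph_iso_sym[OF natcopy_iso[OF QP_simple[OF Ks]]] QP_simple[OF Ks]] by blast
  then show ?thesis using good_iso[OF _ graph_iso_sym[OF isoj] spanning_simple[OF Ks E']] by blast
qed

lemma hom_split:
  assumes W: "W \<subseteq> V" and D: "\<forall>e\<in>D. e \<subseteq> W" and finV: "finite V"
  shows "hom (V, D) G = card (verts G) ^ card (V - W) * hom (W, D) G"
proof -
  let ?P = "\<lambda>f. (restrict f W, restrict f (V - W))"
  let ?Q = "\<lambda>(a, b). (\<lambda>x. if x \<in> W then a x else b x)"
  let ?X = "(V - W) \<rightarrow>\<^sub>E verts G"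
  have Dc: "\<And>u v. {u, v} \<in> D \<Longrightarrow> u \<in> W \<and> v \<in> W" using D by blast
  have "bij_betw ?P (homs (V, D) G) (homs (W, D) G \<times> ?X)"
  proof (rule bij_betw_byWitness[where f'="?Q"])
    show "\<forall>f\<in>homs (V, D) G. ?Q (?P f) = f"
    proof
      fix f assume "f \<in> homs (V, D) G"
      then have f: "f \<in> V \<rightarrow>\<^sub>E verts G" unfolding homs_def verts_pair by blast
      show "?Q (?P f) = f"
      proof
        fix x show "?Q (?P f) x = f x"
          using f W by (cases "x \<in> W"; cases "x \<in> V") (auto simp: PiE_def extensional_def)
      qed
    qed
    show "\<forall>ab\<in>homs (W, D) G \<times> ?X. ?P (?Q ab) = ab"
    proof
      fix ab assume ab: "ab \<in> homs (W, D) G \<times> ?X"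
      obtain a b where ab': "ab = (a, b)" by (cases ab)
      have a: "a \<in> W \<rightarrow>\<^sub>E verts G" using ab ab' unfolding homs_def verts_pair by auto
      have b: "b \<in> ?X" using ab ab' by auto
      have "restrict (?Q ab) W = a"
      proof
        fix x show "restrict (?Q ab) W x = a x" using a ab' by (cases "x \<in> W") (auto simp: PiE_def extensional_def)
      qed
      moreover have "restrict (?Q ab) (V - W) = b"
      proof
        fix x show "restrict (?Q ab) (V - W) x = b x" using b ab' by (cases "x \<in> V - W") (auto simp: PiE_def extensional_def)
      qed
      ultimately show "?P (?Q ab) = ab" using ab' by simp
    qed
    show "?P ` homs (V, D) G \<subseteq> homs (W, D) G \<times> ?X"
    proof
      fix ab assume "ab \<in> ?P ` homs (V, D) G"
      then obtain f where f: "f \<in> homs (V, D) G" "ab = ?P f" by blast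
      have fP: "f \<in> V \<rightarrow>\<^sub>E verts G" and fE: "\<forall>u\<in>V. \<forall>v\<in>V. {u, v} \<in> D \<longrightarrow> {f u, f v} \<in> edges G"
        using f(1) unfolding homs_def verts_pair edges_pair by auto
      have "restrict f W \<in> homs (W, D) G"
        unfolding homs_def verts_pair edges_pair using fP fE W by auto
      moreover have "restrict f (V - W) \<in> ?X" using fP by auto
      ultimately show "ab \<in> homs (W, D) G \<times> ?X" using f(2) by simp
    qed
    show "?Q ` (homs (W, D) G \<times> ?X) \<subseteq> homs (V, D) G"
    proof
      fix f assume "f \<in> ?Q ` (homs (W, D) G \<times> ?X)"
      then obtain a b where ab: "a \<in> homs (W, D) G" "b \<in> ?X" "f = ?Q (a, b)" by blast
      have aP: "a \<in> W \<rightarrow>\<^sub>E verts G" and aE: "\<forall>u\<in>W. \<forall>v\<in>W. {u, v} \<in> D \<longrightarrow> {a u, a v} \<in> edges G"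
        using ab(1) unfolding homs_def verts_pair edges_pair by auto
      have "f \<in> V \<rightarrow>\<^sub>E verts G"
      proof (rule PiE_I)
        fix x assume "x \<in> V" then show "f x \<in> verts G" using aP ab(2,3) by (cases "x \<in> W") auto
      next
        fix x assume "x \<notin> V" then show "f x = undefined" using ab(2,3) W by auto
      qed
      moreover have "\<forall>u\<in>V. \<forall>v\<in>V. {u, v} \<in> D \<longrightarrow> {f u, f v} \<in> edges G"
      proof (intro ballI impI)
        fix u v assume "u \<in> V" "v \<in> V" "{u, v} \<in> D"
        then have "u \<in> W" "v \<in> W" using Dc by auto
        then show "{f u, f v} \<in> edges G" using aE \<open>{u, v} \<in> D\<close> ab(3) by simp
      qed
      ultimately show "f \<in> homs (V, D) G" unfolding homs_def verts_pair edges_pair by blast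
    qed
  qed
  from bij_betw_same_card[OF this] have "hom (V, D) G = card (homs (W, D) G \<times> ?X)" unfolding hom_def .
  also have "\<dots> = hom (W, D) G * card ?X" by (simp add: card_cartesian_product hom_def)
  also have "card ?X = card (verts G) ^ card (V - W)"
    using finV by (simp add: card_PiE)
  finally show ?thesis by simp
qed

lemma empty_graph_eq:
  assumes "simple_graph G" "verts G = {}" shows "G = ({}, {})"
proof -
  have "edges G = {}"
  proof (rule ccontr)
    assume "edges G \<noteq> {}"
    then obtain e where e: "e \<in> edges G" by blast
    then have "card e = 2" "e \<subseteq> verts G" using simple_edge_card[OF assms(1) e] simple_edge_sub[OF assms(1) e] by auto
    then show False using assms(2) by auto
  qed
  then show ?thesis using assms(2) graph_eq[of G] by simp
qed

lemma step_sub: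
  assumes simpF: "\<forall>F\<in>\<F>. simple_graph F"
    and comp: "\<forall>G H :: nat graph. simple_graph G \<longrightarrow> simple_graph H \<longrightarrow> hom_equiv \<F> G H \<longrightarrow>
      hom_equiv \<F> (complement G) (complement H)"
    and K: "good \<F> K" and S: "subgraph S K"
  shows "good \<F> S"
proof -
  have Ks: "simple_graph K" using K unfolding good_def by blast
  have Ss: "simple_graph S" using sub_simple[OF Ks S] .
  let ?V = "verts K" and ?W = "verts S" and ?D = "edges S"
  have WV: "?W \<subseteq> ?V" and DE: "?D \<subseteq> edges K" and DW: "\<forall>e\<in>?D. e \<subseteq> ?W"
    using S unfolding subgraph_def by auto
  have finV: "finite ?V" using simple_finite[OF Ks] .
  have gY: "good \<F> (?V, ?D)" using step_spanning[OF simpF comp K DE] .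
  show ?thesis
  proof (cases "?W = ?V")
    case True
    then have "S = (?V, ?D)" using graph_eq[of S] by simp
    then show ?thesis using gY by simp
  next
    case False
    then have ne: "?V \<noteq> {}" using WV by blast
    have g0: "good \<F> (?V, {})" using step_spanning[OF simpF comp K] by blast
    have h0: "hom (?V, {}) G = card (verts G) ^ card ?V" for G :: "nat graph"
      using hom_split[of "{}" ?V "{}" G] finV by (simp add: hom_def homs_def verts_pair edges_pair)
    have hY: "hom (?V, ?D) G = card (verts G) ^ card (?V - ?W) * hom S G" for G :: "nat graph"
      using hom_split[OF WV DW finV, of G] graph_eq[of S] by simp
    have n0: "card ?V > 0" using ne finV by (simp add: card_gt_0_iff)
    show ?thesis unfolding good_def
    proof (intro conjI Ss inv_parI)
      fix G H :: "nat graph" assume GH: "simple_graph G" "simple_graph H" "hom_equiv \<F> G H"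
      have "int (hom (?V, {}) G) = int (hom (?V, {}) H)"
        using inv_parD[OF conjunct2[OF g0[unfolded good_def]] GH] .
      then have "hom (?V, {}) G = hom (?V, {}) H" by simp
      then have "card (verts G) ^ card ?V = card (verts H) ^ card ?V" using h0[of G] h0[of H] by simp
      then have cGH: "card (verts G) = card (verts H)" using n0 by (simp add: power_eq_iff_eq_base)
      have "int (hom (?V, ?D) G) = int (hom (?V, ?D) H)"
        using inv_parD[OF conjunct2[OF gY[unfolded good_def]] GH] .
      then have e1: "hom (?V, ?D) G = hom (?V, ?D) H" by simp
      have eq: "card (verts G) ^ card (?V - ?W) * hom S G = card (verts G) ^ card (?V - ?W) * hom S H"
      proof -
        have "card (verts G) ^ card (?V - ?W) * hom S G = hom (?V, ?D) G" using hY[of G] by simp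
        also have "\<dots> = hom (?V, ?D) H" using e1 .
        also have "\<dots> = card (verts H) ^ card (?V - ?W) * hom S H" using hY[of H] by simp
        finally show ?thesis using cGH by simp
      qed
      show "int (hom S G) = int (hom S H)"
      proof (cases "card (verts G) = 0")
        case True
        then have "verts G = {}" "verts H = {}" using cGH simple_finite[OF GH(1)] simple_finite[OF GH(2)] by auto
        then have "G = H" using empty_graph_eq GH by metis
        then show ?thesis by simp
      next
        case False
        then show ?thesis using eq by simp
      qed
    qed
  qed
qed

lemma comps_partition:
  assumes K: "simple_graph K" and P: "contraction_partition K P"
  shows "comps (verts K) {e\<in>edges K. \<exists>B\<in>P. e \<subseteq> B} = P"
    and "eqr (verts K) {e\<in>edges K. \<exists>B\<in>P. e \<subseteq> B} = {(x, y). \<exists>B\<in>P. x \<in> B \<and> y \<in> B}"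
proof -
  let ?V = "verts K" and ?Ea = "{e\<in>edges K. \<exists>B\<in>P. e \<subseteq> B}"
  have part: "partition_on ?V P" and conn: "\<forall>B\<in>P. induced_connected K B"
    using P unfolding contraction_partition_def by auto
  let ?R' = "{(x, y). \<exists>B\<in>P. x \<in> B \<and> y \<in> B}"
  have R: "eqr ?V ?Ea = ?R'"
  proof
    show "eqr ?V ?Ea \<subseteq> ?R'"
    proof
      fix xy assume xy: "xy \<in> eqr ?V ?Ea"
      obtain x y where xy': "xy = (x, y)" by (cases xy)
      have xV: "x \<in> ?V" and path: "(x, y) \<in> (rel_of ?Ea)\<^sup>*" using xy xy' unfolding eqr_def by auto
      have "\<exists>B\<in>P. x \<in> B \<and> y \<in> B" using path
      proof (induction rule: rtrancl_induct)
        case base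
        have "x \<in> \<Union>P" using xV partition_onD1[OF part] by simp
        then show ?case by blast
      next
        case (step y z)
        obtain B where B: "B \<in> P" "x \<in> B" "y \<in> B" using step.IH by blast
        have "{y, z} \<in> ?Ea" using step.hyps(2) unfolding rel_of_def by simp
        then obtain B' where B': "B' \<in> P" "{y, z} \<subseteq> B'" by blast
        have "B = B'"
        proof (rule ccontr)
          assume "B \<noteq> B'"
          then have "B \<inter> B' = {}" using disjointD[OF partition_onD2[OF part] B(1) B'(1)] by simp
          then show False using B(3) B'(2) by blast
        qed
        then show ?case using B B' by blast
      qed
      then show "xy \<in> ?R'" using xy' by simp
    qed
    show "?R' \<subseteq> eqr ?V ?Ea"
    proof
      fix xy assume "xy \<in> ?R'"
      then obtain x y B where xy': "xy = (x, y)" "B \<in> P" "x \<in> B" "y \<in> B" by blast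
      have BV: "B \<subseteq> ?V" using partition_onD1[OF part] xy'(2) by blast
      have "(x, y) \<in> {(a, b). a \<in> B \<and> b \<in> B \<and> {a, b} \<in> edges K}\<^sup>*"
        using conn xy' unfolding induced_connected_def by blast
      moreover have "{(a, b). a \<in> B \<and> b \<in> B \<and> {a, b} \<in> edges K} \<subseteq> rel_of ?Ea"
        unfolding rel_of_def using xy'(2) by blast
      ultimately have "(x, y) \<in> (rel_of ?Ea)\<^sup>*" using rtrancl_mono by blast
      then show "xy \<in> eqr ?V ?Ea" using xy' BV unfolding eqr_def by auto
    qed
  qed
  then show "eqr ?V ?Ea = ?R'" .
  show "comps ?V ?Ea = P" unfolding comps_def R using partition_on_eq_quotient[OF part] .
qed

lemma valid_partition:
  assumes K: "simple_graph K" and P: "contraction_partition K P"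
  shows "valid (verts K) {e\<in>edges K. \<exists>B\<in>P. e \<subseteq> B} (edges K - {e\<in>edges K. \<exists>B\<in>P. e \<subseteq> B})"
  unfolding valid_def
proof (intro ballI impI)
  fix e x y assume e: "e \<in> edges K - {e\<in>edges K. \<exists>B\<in>P. e \<subseteq> B}" and xy: "x \<in> e" "y \<in> e"
    and r: "(x, y) \<in> eqr (verts K) {e\<in>edges K. \<exists>B\<in>P. e \<subseteq> B}"
  obtain B where B: "B \<in> P" "x \<in> B" "y \<in> B" using r comps_partition(2)[OF K P] by auto
  show "x = y"
  proof (rule ccontr)
    assume "x \<noteq> y"
    have "card e = 2" using e simple_edge_card[OF K] by blast
    then obtain u v where "u \<noteq> v" "e = {u, v}" using two_set by blast
    then have "e = {x, y}" using xy \<open>x \<noteq> y\<close> by auto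
    then have "e \<subseteq> B" using B by auto
    then show False using e B(1) by blast
  qed
qed

lemma step_contract:
  fixes K :: "'a graph"
  assumes simpF: "\<forall>F\<in>\<F>. simple_graph F"
    and comp: "\<forall>G H :: nat graph. simple_graph G \<longrightarrow> simple_graph H \<longrightarrow> hom_equiv \<F> G H \<longrightarrow>
      hom_equiv \<F> (complement G) (complement H)"
  shows "good \<F> K \<Longrightarrow> contraction_partition K P \<Longrightarrow> good \<F> (quotient_graph K P)"
proof (induction "card (edges K)" arbitrary: K P rule: less_induct)
  case less
  have K: "good \<F> K" and P: "contraction_partition K P" using less.prems by auto
  have Ks: "simple_graph K" using K unfolding good_def by blast
  let ?V = "verts K" and ?E = "edges K"
  let ?Fs = "\<lambda>p. natcopy (QP K p)"
  let ?Ea = "{e\<in>?E. \<exists>B\<in>P. e \<subseteq> B}"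
  let ?j = "(?E, ?Ea)"
  let ?I2 = "{p\<in>Jset ?E. fst p = ?E}"
  let ?I1 = "Jset ?E - ?I2"
  have finE: "finite ?E" using simple_finite_edges[OF Ks] .
  have finJ: "finite (Jset ?E)" using Jset_finite[OF finE] .
  have simpFs: "\<forall>p\<in>Jset ?E. simple_graph (?Fs p)" using natcopy_simple[OF QP_simple[OF Ks]] by blast
  have inv: "inv_par \<F> (\<lambda>G. \<Sum>p\<in>Jset ?E. coef K p * int (hom (?Fs p) G))"
    using inv_expansion[OF comp K] .
  have inv1p: "inv_par \<F> (\<lambda>G. int (hom (?Fs p) G))" if p: "p \<in> ?I1" for p
  proof -
    obtain S A where SA: "p = (S, A)" by (cases p)
    have SE: "S \<subseteq> ?E" "A \<subseteq> S" "S \<noteq> ?E" using p SA unfolding Jset_def by auto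
    have gD: "good \<F> (?V, S)" using step_spanning[OF simpF comp K SE(1)] .
    have lt: "card (edges (?V, S)) < card ?E"
      using psubset_card_mono[OF finE] SE by (auto simp: edges_pair)
    have hA: "\<forall>e\<in>A. e \<subseteq> ?V" using SE simple_edge_sub[OF Ks] by blast
    have cp: "contraction_partition (?V, S) (comps ?V A)" using comps_contraction[OF SE(2) hA] .
    have "good \<F> (quotient_graph (?V, S) (comps ?V A))" using less.hyps[OF lt gD cp] .
    then have "good \<F> (QP K p)" using SA by (simp add: QP_def)
    then have "good \<F> (?Fs p)" using good_iso[OF _ natcopy_iso[OF QP_simple[OF Ks]] natcopy_simple[OF QP_simple[OF Ks]]] by blast
    then show ?thesis unfolding good_def by blast
  qed
  have inv1: "inv_par \<F> (\<lambda>G. \<Sum>p\<in>?I1. coef K p * int (hom (?Fs p) G))"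
  proof (rule inv_parI)
    fix G H :: "nat graph" assume GH: "simple_graph G" "simple_graph H" "hom_equiv \<F> G H"
    show "(\<Sum>p\<in>?I1. coef K p * int (hom (?Fs p) G)) = (\<Sum>p\<in>?I1. coef K p * int (hom (?Fs p) H))"
    proof (intro sum.cong refl)
      fix p assume "p \<in> ?I1"
      then show "coef K p * int (hom (?Fs p) G) = coef K p * int (hom (?Fs p) H)"
        using inv_parD[OF inv1p GH] by simp
    qed
  qed
  have split: "(\<Sum>p\<in>Jset ?E. coef K p * int (hom (?Fs p) G)) =
      (\<Sum>p\<in>?I1. coef K p * int (hom (?Fs p) G)) + (\<Sum>p\<in>?I2. coef K p * int (hom (?Fs p) G))" for G
    using sum.subset_diff[OF _ finJ, of ?I2] by blast
  have inv2: "inv_par \<F> (\<lambda>G. \<Sum>p\<in>?I2. coef K p * int (hom (?Fs p) G))"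
  proof (rule inv_parI)
    fix G H :: "nat graph" assume GH: "simple_graph G" "simple_graph H" "hom_equiv \<F> G H"
    have "(\<Sum>p\<in>Jset ?E. coef K p * int (hom (?Fs p) G)) = (\<Sum>p\<in>Jset ?E. coef K p * int (hom (?Fs p) H))"
      using inv_parD[OF inv GH] .
    moreover have "(\<Sum>p\<in>?I1. coef K p * int (hom (?Fs p) G)) = (\<Sum>p\<in>?I1. coef K p * int (hom (?Fs p) H))"
      using inv_parD[OF inv1 GH] .
    ultimately show "(\<Sum>p\<in>?I2. coef K p * int (hom (?Fs p) G)) = (\<Sum>p\<in>?I2. coef K p * int (hom (?Fs p) H))"
      using split[of G] split[of H] by simp
  qed
  have finI2: "finite ?I2" using finJ by simp
  have simpFs2: "\<forall>p\<in>?I2. simple_graph (?Fs p)" using simpFs by blast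
  have jI2: "?j \<in> ?I2" unfolding Jset_def by auto
  have sum0: "(\<Sum>p\<in>{p\<in>?I2. graph_iso (?Fs p) (?Fs ?j)}. coef K p) \<noteq> 0"
  proof (rule class_sum_nonzero[where Q="\<lambda>p. valid ?V (snd p) (fst p - snd p)" and j="?j"])
    show "finite {p\<in>?I2. graph_iso (?Fs p) (?Fs ?j)}" using finJ by simp
    show "?j \<in> {p\<in>?I2. graph_iso (?Fs p) (?Fs ?j)}" using jI2 graph_iso_refl by blast
    show "valid ?V (snd ?j) (fst ?j - snd ?j)" using valid_partition[OF Ks P] by simp
    show "((-1) ^ card ?E :: int) \<noteq> 0" by simp
    show "\<forall>p\<in>{p\<in>?I2. graph_iso (?Fs p) (?Fs ?j)}.
        coef K p = (if valid ?V (snd p) (fst p - snd p) then (-1) ^ card ?E else 0)"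
      by (auto simp: coef_def)
  qed
  have "inv_par \<F> (\<lambda>G. int (hom (?Fs ?j) G))"
    using indep[OF simpF finI2 simpFs2 inv2 jI2 sum0] .
  then have "good \<F> (?Fs ?j)" using natcopy_simple[OF QP_simple[OF Ks]] unfolding good_def by blast
  then have "good \<F> (QP K ?j)"
    using good_iso[OF _ graph_iso_sym[OF natcopy_iso[OF QP_simple[OF Ks]]] QP_simple[OF Ks]] by blast
  moreover have "QP K ?j = quotient_graph K P"
    using comps_partition(1)[OF Ks P] graph_eq[of K] by (simp add: QP_def)
  ultimately show ?case by simp
qed

lemma cl_good: "K \<in> cl \<F> \<longleftrightarrow> good \<F> K"
  unfolding cl_def good_def inv_par_def by simp

lemma partI:
  assumes simpF: "\<forall>F\<in>\<F>. simple_graph F" and cc: "closed_contraction \<F>" and cd: "closed_deletion \<F>"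
  shows "\<forall>G H :: nat graph. simple_graph G \<longrightarrow> simple_graph H \<longrightarrow> hom_equiv \<F> G H \<longrightarrow>
      hom_equiv \<F> (complement G) (complement H)"
proof (intro allI impI)
  fix G H :: "nat graph" assume G: "simple_graph G" and H: "simple_graph H" and GH: "hom_equiv \<F> G H"
  show "hom_equiv \<F> (complement G) (complement H)"
    unfolding hom_equiv_def
  proof
    fix F assume F: "F \<in> \<F>"
    have Fs: "simple_graph F" using simpF F by blast
    let ?V = "verts F"
    have mem: "natcopy (QP F p) \<in> \<F>" if p: "p \<in> Jset (edges F)" for p
    proof -
      obtain S A where SA: "p = (S, A)" by (cases p)
      have SE: "S \<subseteq> edges F" "A \<subseteq> S" using p SA unfolding Jset_def by auto
      have D: "(?V, S) \<in> \<F>" using cd F SE(1) unfolding closed_deletion_def by blast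
      have hA: "\<forall>e\<in>A. e \<subseteq> ?V" using SE simple_edge_sub[OF Fs] by blast
      have cp: "contraction_partition (?V, S) (comps ?V A)" using comps_contraction[OF SE(2) hA] .
      have Qs: "simple_graph (QP F p)" using QP_simple[OF Fs] .
      have "graph_iso (natcopy (QP F p)) (quotient_graph (?V, S) (comps ?V A))"
        using graph_iso_sym[OF natcopy_iso[OF Qs]] SA by (simp add: QP_def)
      then have "contracts_to (?V, S) (natcopy (QP F p))" unfolding contracts_to_def using cp by blast
      then show ?thesis using cc D natcopy_simple[OF Qs] unfolding closed_contraction_def by blast
    qed
    have "int (hom F (complement G)) = (\<Sum>p\<in>Jset (edges F). coef F p * int (hom (natcopy (QP F p)) G))"
      using expansion2[OF Fs G] .
    also have "\<dots> = (\<Sum>p\<in>Jset (edges F). coef F p * int (hom (natcopy (QP F p)) H))"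
    proof (intro sum.cong refl)
      fix p assume "p \<in> Jset (edges F)"
      then have "hom (natcopy (QP F p)) G = hom (natcopy (QP F p)) H" using mem GH unfolding hom_equiv_def by blast
      then show "coef F p * int (hom (natcopy (QP F p)) G) = coef F p * int (hom (natcopy (QP F p)) H)" by simp
    qed
    also have "\<dots> = int (hom F (complement H))" using expansion2[OF Fs H] by simp
    finally show "hom F (complement G) = hom F (complement H)" by simp
  qed
qed

lemma partI_iff:
  assumes simpF: "\<forall>F\<in>\<F>. simple_graph F" and cc: "closed_contraction \<F>" and cd: "closed_deletion \<F>"
  shows "\<forall>G H :: nat graph. simple_graph G \<longrightarrow> simple_graph H \<longrightarrow>
      (hom_equiv \<F> G H \<longleftrightarrow> hom_equiv \<F> (complement G) (complement H))"
proof (intro allI impI)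
  fix G H :: "nat graph" assume G: "simple_graph G" and H: "simple_graph H"
  note P = partI[OF simpF cc cd]
  show "hom_equiv \<F> G H \<longleftrightarrow> hom_equiv \<F> (complement G) (complement H)"
  proof
    assume "hom_equiv \<F> G H" then show "hom_equiv \<F> (complement G) (complement H)" using P G H by blast
  next
    assume "hom_equiv \<F> (complement G) (complement H)"
    then have "hom_equiv \<F> (complement (complement G)) (complement (complement H))"
      using P complement_simple[OF G] complement_simple[OF H] by blast
    then show "hom_equiv \<F> G H" using complement_complement[OF G] complement_complement[OF H] by simp
  qed
qed

lemma equiv_cl:
  fixes G H :: "nat graph"
  assumes simpF: "\<forall>F\<in>\<F>. simple_graph F" and G: "simple_graph G" and H: "simple_graph H"
  shows "hom_equiv \<F> G H \<longleftrightarrow> hom_equiv (cl \<F>) G H"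
proof
  assume GH: "hom_equiv \<F> G H"
  show "hom_equiv (cl \<F>) G H" unfolding hom_equiv_def
  proof
    fix K assume "K \<in> cl \<F>"
    then have "\<forall>G H :: nat graph. simple_graph G \<longrightarrow> simple_graph H \<longrightarrow> hom_equiv \<F> G H \<longrightarrow> hom K G = hom K H"
      unfolding cl_def by blast
    then show "hom K G = hom K H" using G H GH by blast
  qed
next
  assume h: "hom_equiv (cl \<F>) G H"
  have "\<F> \<subseteq> cl \<F>" using simpF unfolding cl_def hom_equiv_def by blast
  then show "hom_equiv \<F> G H" using h unfolding hom_equiv_def by blast
qed

lemma cl_simple: "\<forall>F\<in>cl \<F>. simple_graph F"
  unfolding cl_def by blast

lemma minor_closed_cc:
  assumes mc: "minor_closed (cl \<F>)"
  shows "closed_contraction (cl \<F>)"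
  unfolding closed_contraction_def
proof (intro ballI allI impI)
  fix F F' :: "nat graph" assume F: "F \<in> cl \<F>" and F's: "simple_graph F'" and ct: "contracts_to F F'"
  obtain P where P: "contraction_partition F P" "graph_iso F' (quotient_graph F P)"
    using ct unfolding contracts_to_def by blast
  have "subgraph (quotient_graph F P) (quotient_graph F P)"
    unfolding subgraph_def by (auto simp: edges_quot verts_quot)
  then have "minor F' F" unfolding minor_def using P by blast
  then show "F' \<in> cl \<F>" using mc F F's unfolding minor_closed_def by blast
qed

lemma minor_closed_cd:
  assumes mc: "minor_closed (cl \<F>)"
  shows "closed_deletion (cl \<F>)"
  unfolding closed_deletion_def
proof (intro ballI allI impI)
  fix F :: "nat graph" and E' assume F: "F \<in> cl \<F>" and E': "E' \<subseteq> edges F"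
  have Fs: "simple_graph F" using F cl_simple by blast
  let ?V = "verts F"
  have Ms: "simple_graph (?V, E')" using spanning_simple[OF Fs E'] .
  have cp: "contraction_partition F (comps ?V {})"
    using comps_contraction[of "{}" "edges F" ?V] graph_eq[of F] by simp
  let ?S = "quotient_graph (?V, E') (comps ?V {})"
  have sub: "subgraph ?S (quotient_graph F (comps ?V {}))"
    unfolding subgraph_def edges_quot verts_quot edges_pair using E' by blast
  have "\<forall>e\<in>E'. card e = 2" using E' simple_edge_card[OF Fs] by blast
  then have "graph_iso (?V, E') ?S" by (rule iso_singletons)
  then have "minor (?V, E') F" unfolding minor_def using cp sub by blast
  then show "(?V, E') \<in> cl \<F>" using mc F Ms unfolding minor_closed_def by blast
qed

theorem theorem8:
  fixes \<F> :: "nat graph set"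
  assumes "\<forall>F\<in>\<F>. simple_graph F"
  shows "(closed_contraction \<F> \<and> closed_deletion \<F> \<longrightarrow>
           (\<forall>G H :: nat graph. simple_graph G \<longrightarrow> simple_graph H \<longrightarrow>
              (hom_equiv \<F> G H \<longleftrightarrow> hom_equiv \<F> (complement G) (complement H))))
       \<and> ((\<forall>G H :: nat graph. simple_graph G \<longrightarrow> simple_graph H \<longrightarrow>
              (hom_equiv \<F> G H \<longleftrightarrow> hom_equiv \<F> (complement G) (complement H)))
           \<longleftrightarrow> minor_closed (cl \<F>))"
proof (intro conjI impI iffI)
  assume "closed_contraction \<F> \<and> closed_deletion \<F>"
  then show "\<forall>G H :: nat graph. simple_graph G \<longrightarrow> simple_graph H \<longrightarrow>
              (hom_equiv \<F> G H \<longleftrightarrow> hom_equiv \<F> (complement G) (complement H))"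
    using partI_iff[OF assms] by blast
next
  assume h: "\<forall>G H :: nat graph. simple_graph G \<longrightarrow> simple_graph H \<longrightarrow>
              (hom_equiv \<F> G H \<longleftrightarrow> hom_equiv \<F> (complement G) (complement H))"
  then have comp: "\<forall>G H :: nat graph. simple_graph G \<longrightarrow> simple_graph H \<longrightarrow> hom_equiv \<F> G H \<longrightarrow>
      hom_equiv \<F> (complement G) (complement H)" by blast
  show "minor_closed (cl \<F>)"
    unfolding minor_closed_def
  proof (intro ballI allI impI)
    fix K M :: "nat graph" assume K: "K \<in> cl \<F>" and Ms: "simple_graph M" and mn: "minor M K"
    obtain P S where PS: "contraction_partition K P" "subgraph S (quotient_graph K P)" "graph_iso M S"
      using mn unfolding minor_def by blast
    have gK: "good \<F> K" using K cl_good by blast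
    have gQ: "good \<F> (quotient_graph K P)" using step_contract[OF assms comp gK PS(1)] .
    have gS: "good \<F> S" using step_sub[OF assms comp gQ PS(2)] .
    have Ss: "simple_graph S" using gS unfolding good_def by blast
    have "good \<F> M" using good_iso[OF gS graph_iso_sym[OF PS(3)] Ms] .
    then show "M \<in> cl \<F>" using cl_good by blast
  qed
next
  assume mc: "minor_closed (cl \<F>)"
  have P: "\<forall>G H :: nat graph. simple_graph G \<longrightarrow> simple_graph H \<longrightarrow>
      (hom_equiv (cl \<F>) G H \<longleftrightarrow> hom_equiv (cl \<F>) (complement G) (complement H))"
    using partI_iff[OF cl_simple minor_closed_cc[OF mc] minor_closed_cd[OF mc]] .
  show "\<forall>G H :: nat graph. simple_graph G \<longrightarrow> simple_graph H \<longrightarrow>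
              (hom_equiv \<F> G H \<longleftrightarrow> hom_equiv \<F> (complement G) (complement H))"
  proof (intro allI impI)
    fix G H :: "nat graph" assume G: "simple_graph G" and H: "simple_graph H"
    have "hom_equiv \<F> G H \<longleftrightarrow> hom_equiv (cl \<F>) G H" using equiv_cl[OF assms G H] .
    also have "\<dots> \<longleftrightarrow> hom_equiv (cl \<F>) (complement G) (complement H)" using P G H by blast
    also have "\<dots> \<longleftrightarrow> hom_equiv \<F> (complement G) (complement H)"
      using equiv_cl[OF assms complement_simple[OF G] complement_simple[OF H]] by simp
    finally show "hom_equiv \<F> G H \<longleftrightarrow> hom_equiv \<F> (complement G) (complement H)" .
  qed
qed

end
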